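(* Let $A\in\mathbb{R}^{n\times ML}$ have i.i.d. $\mathcal{N}(0,1/n)$ entries with columns $A_1,\dots,A_{ML}$ grouped into $L$ sections of $M$ columns, let $P_1,\dots,P_L>0$ with $\sum_\ell P_\ell=P$, and let $\beta\in\mathbb{R}^{ML}$ be a fixed vector with exactly one non-zero entry in each section $\ell$, equal to $\sqrt{nP_\ell}$. Let $y=A\beta+w$ with $w$ i.i.d. $\mathcal{N}(0,\sigma^2)$ independent of $A$, and define $\mathcal{Z}_{1,j}=\sqrt n\,A_j^{\top}y/\|y\|$ for $j\in[ML]$. Then, jointly in $j$, $$\mathcal{Z}_{1,j}\stackrel{d}{=}\frac{\beta_j}{\sqrt{P+\sigma^2}}\cdot\frac{\chi_n}{\sqrt n}+N_{1,j},$$ i.e. for $j$ in section $\ell$ the shift is $\sqrt{nP_\ell/(P+\sigma^2)}\,\frac{\chi_n}{\sqrt n}\mathbf 1\{j\text{ is the non-zero index of }\beta\}$, where $N_1=(N_{1,j})_{j\in[ML]}$ is multivariate normal with mean zero and covariance $I-\frac{\beta\beta^{\top}}{n(P+\sigma^2)}$, and $\chi_n^2=\|y\|^2/(P+\sigma^2)$ is a chi-square random variable with $n$ degrees of freedom independent of $N_1$. *)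

theory Defs
  imports "HOL-Probability.Probability"
begin

definition gauss :: "real \<Rightarrow> real \<Rightarrow> real measure" where
  "gauss mu s = density lborel (normal_density mu s)"

definition std_gauss_vec :: "'i set \<Rightarrow> ('i \<Rightarrow> real) measure" where
  "std_gauss_vec I = PiM I (\<lambda>_. gauss 0 1)"

definition chi_square :: "nat \<Rightarrow> real measure" where
  "chi_square n = distr (std_gauss_vec {0..<n}) borel (\<lambda>g. \<Sum>i<n. (g i)\<^sup>2)"

definition is_mvn :: "'i set \<Rightarrow> ('i \<Rightarrow> 'i \<Rightarrow> real) \<Rightarrow> ('i \<Rightarrow> real) measure \<Rightarrow> bool" where
  "is_mvn I Cov mu \<longleftrightarrow>
     (\<exists>C :: 'i \<Rightarrow> 'i \<Rightarrow> real.
        (\<forall>i\<in>I. \<forall>j\<in>I. Cov i j = (\<Sum>k\<in>I. C i k * C j k)) \<and>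
        mu = distr (std_gauss_vec I) (PiM I (\<lambda>_. borel))
               (\<lambda>g. \<lambda>i\<in>I. \<Sum>k\<in>I. C i k * g k))"

definition design_noise_space :: "nat \<Rightarrow> nat \<Rightarrow> real \<Rightarrow>
    ((nat \<times> nat \<Rightarrow> real) \<times> (nat \<Rightarrow> real)) measure" where
  "design_noise_space n N \<sigma> =
     PiM ({0..<n} \<times> {0..<N}) (\<lambda>_. gauss 0 (1 / sqrt (real n)))
     \<Otimes>\<^sub>M PiM {0..<n} (\<lambda>_. gauss 0 \<sigma>)"

definition obs :: "nat \<Rightarrow> nat \<Rightarrow> (nat \<Rightarrow> real) \<Rightarrow> (nat \<times> nat \<Rightarrow> real) \<Rightarrow> (nat \<Rightarrow> real) \<Rightarrow> nat \<Rightarrow> real" where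
  "obs n N \<beta> A w i = (\<Sum>j<N. A (i, j) * \<beta> j) + w i"

definition vnorm :: "nat \<Rightarrow> (nat \<Rightarrow> real) \<Rightarrow> real" where
  "vnorm n y = sqrt (\<Sum>i<n. (y i)\<^sup>2)"

definition Z1 :: "nat \<Rightarrow> nat \<Rightarrow> (nat \<Rightarrow> real) \<Rightarrow> (nat \<times> nat \<Rightarrow> real) \<Rightarrow> (nat \<Rightarrow> real) \<Rightarrow> nat \<Rightarrow> real" where
  "Z1 n N \<beta> A w j =
     sqrt (real n) * (\<Sum>i<n. A (i, j) * obs n N \<beta> A w i) / vnorm n (obs n N \<beta> A w)"

end

theory Submission
  imports Defs
begin

lemma kernel_pair:
  assumes sf1: "sigma_finite_measure M1" and sf2: "sigma_finite_measure M2"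
    and sf3: "sigma_finite_measure M3"
    and T[measurable]: "(\<lambda>(a,b). T a b) \<in> measurable (M1 \<Otimes>\<^sub>M M2) M3"
    and AE: "AE a in M1. distr M2 M3 (T a) = M3"
  shows "distr (M1 \<Otimes>\<^sub>M M2) (M1 \<Otimes>\<^sub>M M3) (\<lambda>(a,b). (a, T a b)) = M1 \<Otimes>\<^sub>M M3"
proof (rule pair_measure_eqI[OF sf1 sf3, symmetric])
  interpret M2: sigma_finite_measure M2 by fact
  have F: "(\<lambda>(a,b). (a, T a b)) \<in> measurable (M1 \<Otimes>\<^sub>M M2) (M1 \<Otimes>\<^sub>M M3)"
    by measurable
  show "sets (M1 \<Otimes>\<^sub>M M3) = sets (distr (M1 \<Otimes>\<^sub>M M2) (M1 \<Otimes>\<^sub>M M3) (\<lambda>(a, b). (a, T a b)))"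
    by simp
  fix A B assume A: "A \<in> sets M1" and B: "B \<in> sets M3"
  have Ta: "T a \<in> measurable M2 M3" if "a \<in> space M1" for a
  proof -
    have "(\<lambda>b. (\<lambda>(a,b). T a b) (a, b)) \<in> measurable M2 M3"
      using measurable_Pair1'[OF that] T by (rule measurable_comp[unfolded comp_def])
    then show ?thesis by simp
  qed
  have "emeasure (distr (M1 \<Otimes>\<^sub>M M2) (M1 \<Otimes>\<^sub>M M3) (\<lambda>(a, b). (a, T a b))) (A \<times> B)
      = emeasure (M1 \<Otimes>\<^sub>M M2) ((\<lambda>(a, b). (a, T a b)) -` (A \<times> B) \<inter> space (M1 \<Otimes>\<^sub>M M2))"
    using A B F by (simp add: emeasure_distr)
  also have "\<dots> = \<integral>\<^sup>+ a. emeasure M2 (Pair a -` ((\<lambda>(a, b). (a, T a b)) -` (A \<times> B) \<inter> space (M1 \<Otimes>\<^sub>M M2))) \<partial>M1"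
    using A B F by (intro M2.emeasure_pair_measure_alt measurable_sets[OF F]) auto
  also have "\<dots> = \<integral>\<^sup>+ a. indicator A a * emeasure M2 (T a -` B \<inter> space M2) \<partial>M1"
    apply (intro nn_integral_cong)
    subgoal for x
      using sets.sets_into_space[OF A]
      by (cases "x \<in> A") (auto simp: space_pair_measure vimage_def intro!: arg_cong[where f="emeasure M2"])
    done
  also have "\<dots> = \<integral>\<^sup>+ a. indicator A a * emeasure M3 B \<partial>M1"
  proof (intro nn_integral_cong_AE)
    show "AE a in M1. indicator A a * emeasure M2 (T a -` B \<inter> space M2) = indicator A a * emeasure M3 B"
      using AE
    proof eventually_elim
      case (elim a)
      show ?case
      proof (cases "a \<in> space M1")
        case True
        have "emeasure M2 (T a -` B \<inter> space M2) = emeasure (distr M2 M3 (T a)) B"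
          using B Ta[OF True] by (simp add: emeasure_distr)
        then show ?thesis using elim by simp
      qed (use sets.sets_into_space[OF A] in \<open>auto split: split_indicator\<close>)
    qed
  qed
  also have "\<dots> = emeasure M1 A * emeasure M3 B"
    using A by (simp add: nn_integral_multc mult.commute)
  finally show "emeasure M1 A * emeasure M3 B = emeasure (distr (M1 \<Otimes>\<^sub>M M2) (M1 \<Otimes>\<^sub>M M3) (\<lambda>(a, b). (a, T a b))) (A \<times> B)"
    by simp
qed

lemma emeasure_lborel_translate:
  fixes A :: "real set" assumes A: "A \<in> sets borel"
  shows "emeasure lborel ((\<lambda>x. x + c) -` A) = emeasure lborel A"
proof -
  have "emeasure lborel ((\<lambda>x. x + c) -` A) = emeasure lborel (((+) c) -` A \<inter> space lborel)"
  proof -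
    have "(\<lambda>x. x + c) = (+) c" by (auto simp: add.commute)
    then show ?thesis by simp
  qed
  also have "\<dots> = emeasure (distr lborel borel ((+) c)) A"
    using A by (simp add: emeasure_distr)
  also have "\<dots> = emeasure lborel A" by (simp add: lborel_distr_plus)
  finally show ?thesis .
qed

lemma PiM_lborel_translate:
  fixes I :: "'i set" and c :: "'i \<Rightarrow> real"
  assumes fin: "finite I"
  shows "distr (PiM I (\<lambda>_. lborel)) (PiM I (\<lambda>_. lborel)) (\<lambda>x. \<lambda>i\<in>I. x i + c i) = PiM I (\<lambda>_. lborel)"
proof (rule product_sigma_finite.PiM_eqI[OF _ fin])
  interpret PS: product_sigma_finite "\<lambda>_. lborel :: real measure"
    by (simp add: product_sigma_finite_def lborel.sigma_finite_measure_axioms)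
  show "product_sigma_finite (\<lambda>_. lborel :: real measure)" ..
  show "sets (distr (PiM I (\<lambda>_. lborel)) (PiM I (\<lambda>_. lborel)) (\<lambda>x. \<lambda>i\<in>I. x i + c i)) = sets (PiM I (\<lambda>_. lborel))"
    by simp
  fix A assume A: "\<And>i. i \<in> I \<Longrightarrow> A i \<in> sets (lborel::real measure)"
  have meas: "(\<lambda>x. \<lambda>i\<in>I. x i + c i) \<in> measurable (PiM I (\<lambda>_. lborel)) (PiM I (\<lambda>_. lborel :: real measure))"
    by measurable
  have pre: "(\<lambda>x. \<lambda>i\<in>I. x i + c i) -` Pi\<^sub>E I A \<inter> space (PiM I (\<lambda>_. lborel)) = Pi\<^sub>E I (\<lambda>i. (\<lambda>x. x + c i) -` A i)"
    by (auto simp: space_PiM PiE_iff extensional_def)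
  have "emeasure (distr (PiM I (\<lambda>_. lborel)) (PiM I (\<lambda>_. lborel)) (\<lambda>x. \<lambda>i\<in>I. x i + c i)) (Pi\<^sub>E I A)
     = emeasure (PiM I (\<lambda>_. lborel)) (Pi\<^sub>E I (\<lambda>i. (\<lambda>x. x + c i) -` A i))"
    using A by (subst emeasure_distr[OF meas]) (auto simp: pre intro!: sets_PiM_I_finite fin)
  also have "\<dots> = (\<Prod>i\<in>I. emeasure lborel ((\<lambda>x. x + c i) -` A i))"
    using A fin by (subst PS.emeasure_PiM) (auto intro!: measurable_sets_borel[of _ borel])
  also have "\<dots> = (\<Prod>i\<in>I. emeasure lborel (A i))"
    using A by (intro prod.cong refl emeasure_lborel_translate) auto
  finally show "emeasure (distr (PiM I (\<lambda>_. lborel)) (PiM I (\<lambda>_. lborel)) (\<lambda>x. \<lambda>i\<in>I. x i + c i)) (Pi\<^sub>E I A) = (\<Prod>i\<in>I. emeasure lborel (A i))" .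
qed


lemma PiM_lborel_shear:
  fixes J I1 :: "'i set" and g :: "('i \<Rightarrow> real) \<Rightarrow> 'i \<Rightarrow> real"
  assumes fin: "finite J" and sub: "I1 \<subseteq> J"
    and g: "\<And>i. i \<in> I1 \<Longrightarrow> (\<lambda>y. g y i) \<in> borel_measurable (PiM (J - I1) (\<lambda>_. lborel))"
  shows "distr (PiM J (\<lambda>_. lborel)) (PiM J (\<lambda>_. lborel))
           (\<lambda>x. \<lambda>j\<in>J. if j \<in> I1 then x j + g (restrict x (J - I1)) j else x j) = PiM J (\<lambda>_. lborel)"
proof -
  define I2 where "I2 = J - I1"
  let ?L = "\<lambda>I. PiM I (\<lambda>_. lborel :: real measure)"
  let ?S = "\<lambda>x. \<lambda>j\<in>J. if j \<in> I1 then x j + g (restrict x I2) j else x j"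
  interpret PS: product_sigma_finite "\<lambda>_. lborel :: real measure"
    by (simp add: product_sigma_finite_def lborel.sigma_finite_measure_axioms)
  have J: "J = I2 \<union> I1" "I2 \<inter> I1 = {}" using sub by (auto simp: I2_def)
  have fin1: "finite I1" "finite I2" using fin sub by (auto simp: I2_def intro: finite_subset)
  interpret S1: sigma_finite_measure "?L I1" by (rule PS.sigma_finite[OF fin1(1)])
  interpret S2: sigma_finite_measure "?L I2" by (rule PS.sigma_finite[OF fin1(2)])
  have g': "i \<in> I1 \<Longrightarrow> (\<lambda>y. g y i) \<in> borel_measurable (?L I2)" for i using g by (simp add: I2_def)
  define T where "T a b = (\<lambda>i\<in>I1. b i + g a i)" for a b :: "'i \<Rightarrow> real"
  have Tm: "(\<lambda>(a,b). T a b) \<in> measurable (?L I2 \<Otimes>\<^sub>M ?L I1) (?L I1)"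
    unfolding T_def split_beta'
    apply (rule measurable_restrict)
    apply (subst measurable_lborel1)
    apply (rule borel_measurable_add)
    apply (rule measurable_compose[OF measurable_snd], subst measurable_lborel1[symmetric], rule measurable_component_singleton, assumption)
    apply (rule measurable_compose[OF measurable_fst g'[unfolded measurable_lborel1]], assumption)
    done
  have merge_m: "merge I2 I1 \<in> measurable (?L I2 \<Otimes>\<^sub>M ?L I1) (?L J)"
    using J by (simp add: measurable_merge)
  have Fm: "(\<lambda>(a,b). (a, T a b)) \<in> measurable (?L I2 \<Otimes>\<^sub>M ?L I1) (?L I2 \<Otimes>\<^sub>M ?L I1)"
    using Tm by measurable
  have comp: "j \<in> J \<Longrightarrow> (\<lambda>x. x j) \<in> borel_measurable (?L J)" for j
    using measurable_component_singleton[of j J "\<lambda>_. lborel::real measure"] by simp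
  have Sm: "?S \<in> measurable (?L J) (?L J)"
  proof (rule measurable_restrict)
    fix j assume j: "j \<in> J"
    show "(\<lambda>x. if j \<in> I1 then x j + g (restrict x I2) j else x j) \<in> measurable (?L J) lborel"
    proof (cases "j \<in> I1")
      case True
      have "(\<lambda>x. g (restrict x I2) j) \<in> borel_measurable (?L J)"
        by (rule measurable_compose[OF measurable_restrict_subset g'[OF True, unfolded measurable_lborel1]]) (use J in auto)
      then show ?thesis using True comp[OF j] by simp
    qed (use comp[OF j] in simp)
  qed
  have kp: "distr (?L I2 \<Otimes>\<^sub>M ?L I1) (?L I2 \<Otimes>\<^sub>M ?L I1) (\<lambda>(a,b). (a, T a b)) = ?L I2 \<Otimes>\<^sub>M ?L I1"
  proof (rule kernel_pair[OF S2.sigma_finite_measure_axioms S1.sigma_finite_measure_axioms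
          S1.sigma_finite_measure_axioms Tm])
    show "AE a in ?L I2. distr (?L I1) (?L I1) (T a) = ?L I1"
      unfolding T_def using PiM_lborel_translate[OF fin1(1)] by simp
  qed
  have DM: "distr (?L I2 \<Otimes>\<^sub>M ?L I1) (?L J) (merge I2 I1) = ?L J"
    using PS.distr_merge[OF J(2) fin1(2) fin1(1)] J(1) by simp
  have eq: "?S (merge I2 I1 ab) = merge I2 I1 ((\<lambda>(a,b). (a, T a b)) ab)"
    if "ab \<in> space (?L I2 \<Otimes>\<^sub>M ?L I1)" for ab
  proof -
    obtain a b where ab: "ab = (a,b)" by force
    have a: "a \<in> extensional I2" using that by (auto simp: ab space_pair_measure space_PiM PiE_def)
    have ra: "restrict (merge I2 I1 (a, b)) I2 = a"
      using a J(2) by (auto simp: restrict_def merge_def extensional_def fun_eq_iff)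
    have "?S (merge I2 I1 (a,b)) = (\<lambda>j\<in>J. if j \<in> I1 then merge I2 I1 (a,b) j + g a j else merge I2 I1 (a,b) j)"
      by (simp only: ra)
    then show ?thesis
      unfolding ab using J by (auto simp: T_def merge_def restrict_def fun_eq_iff)
  qed
  have "distr (?L J) (?L J) ?S = distr (distr (?L I2 \<Otimes>\<^sub>M ?L I1) (?L J) (merge I2 I1)) (?L J) ?S"
    by (simp add: DM)
  also have "\<dots> = distr (?L I2 \<Otimes>\<^sub>M ?L I1) (?L J) (?S \<circ> merge I2 I1)"
    by (rule distr_distr[OF Sm merge_m])
  also have "\<dots> = distr (?L I2 \<Otimes>\<^sub>M ?L I1) (?L J) (merge I2 I1 \<circ> (\<lambda>(a,b). (a, T a b)))"
    by (rule distr_cong) (simp_all add: eq)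
  also have "\<dots> = distr (distr (?L I2 \<Otimes>\<^sub>M ?L I1) (?L I2 \<Otimes>\<^sub>M ?L I1) (\<lambda>(a,b). (a, T a b))) (?L J) (merge I2 I1)"
    by (rule distr_distr[OF merge_m Fm, symmetric])
  also have "\<dots> = ?L J" by (simp add: kp DM)
  finally show ?thesis unfolding I2_def .
qed

lemma PiM_density_lborel:
  fixes f :: "'i \<Rightarrow> real \<Rightarrow> ennreal"
  assumes fin: "finite I" and f[measurable]: "\<And>i. f i \<in> borel_measurable borel"
    and sf: "\<And>i. sigma_finite_measure (density lborel (f i))"
  shows "PiM I (\<lambda>i. density lborel (f i)) = density (PiM I (\<lambda>_. lborel)) (\<lambda>x. \<Prod>i\<in>I. f i (x i))"
proof (rule product_sigma_finite.PiM_eqI[OF _ fin, symmetric])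
  show "product_sigma_finite (\<lambda>i. density lborel (f i))"
    by (simp add: product_sigma_finite_def sf)
  interpret PS: product_sigma_finite "\<lambda>_. lborel :: real measure"
    by (simp add: product_sigma_finite_def lborel.sigma_finite_measure_axioms)
  show "sets (density (PiM I (\<lambda>_. lborel)) (\<lambda>x. \<Prod>i\<in>I. f i (x i))) = sets (PiM I (\<lambda>i. density lborel (f i)))"
    by (simp cong: sets_PiM_cong)
  fix A assume A: "\<And>i. i \<in> I \<Longrightarrow> A i \<in> sets (density lborel (f i))"
  have A': "A i \<in> sets borel" if "i \<in> I" for i using A[OF that] by simp
  have PA: "Pi\<^sub>E I A \<in> sets (PiM I (\<lambda>_. lborel :: real measure))"
    using A' fin by (auto intro!: sets_PiM_I_finite)
  have mf: "(\<lambda>x. \<Prod>i\<in>I. f i (x i)) \<in> borel_measurable (PiM I (\<lambda>_. lborel))"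
    by measurable
  have "emeasure (density (PiM I (\<lambda>_. lborel)) (\<lambda>x. \<Prod>i\<in>I. f i (x i))) (Pi\<^sub>E I A)
      = \<integral>\<^sup>+ x. (\<Prod>i\<in>I. f i (x i)) * indicator (Pi\<^sub>E I A) x \<partial>PiM I (\<lambda>_. lborel)"
    using PA mf by (simp add: emeasure_density)
  also have "\<dots> = \<integral>\<^sup>+ x. (\<Prod>i\<in>I. f i (x i) * indicator (A i) (x i)) \<partial>PiM I (\<lambda>_. lborel)"
  proof (intro nn_integral_cong)
    fix x assume x: "x \<in> space (PiM I (\<lambda>_. lborel :: real measure))"
    show "(\<Prod>i\<in>I. f i (x i)) * indicator (Pi\<^sub>E I A) x = (\<Prod>i\<in>I. f i (x i) * indicator (A i) (x i))"
    proof (cases "x \<in> Pi\<^sub>E I A")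
      case True then show ?thesis by (auto simp: prod.distrib PiE_iff intro!: prod.cong)
    next
      case False
      then obtain i where "i \<in> I" "x i \<notin> A i" using x by (auto simp: space_PiM PiE_iff)
      then show ?thesis using False fin by (auto intro!: prod_zero bexI[of _ i])
    qed
  qed
  also have "\<dots> = (\<Prod>i\<in>I. \<integral>\<^sup>+ y. f i y * indicator (A i) y \<partial>lborel)"
    using A' by (intro PS.product_nn_integral_prod fin) auto
  also have "\<dots> = (\<Prod>i\<in>I. emeasure (density lborel (f i)) (A i))"
    using A' by (intro prod.cong refl) (simp add: emeasure_density)
  finally show "emeasure (density (PiM I (\<lambda>_. lborel)) (\<lambda>x. \<Prod>i\<in>I. f i (x i))) (Pi\<^sub>E I A) = (\<Prod>i\<in>I. emeasure (density lborel (f i)) (A i))" .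
qed

definition Jn :: "nat \<Rightarrow> nat \<Rightarrow> (nat \<times> nat) set" where
  "Jn n N = {0..<n} \<times> {0..<Suc N}"

definition qf :: "(nat \<Rightarrow> real) \<Rightarrow> nat \<Rightarrow> (nat \<times> nat \<Rightarrow> real) \<Rightarrow> nat \<Rightarrow> real" where
  "qf w N x i = (\<Sum>l\<in>{1..N}. w l * x (i, l))"

definition shA where
  "shA n N w t x = (\<lambda>p\<in>Jn n N. if snd p = 0 then x p + t * qf w N x (fst p) else x p)"

definition shB where
  "shB n N w s x = (\<lambda>p\<in>Jn n N. if snd p = 0 then x p else x p + s * w (snd p) * x (fst p, 0))"

definition Rot where
  "Rot n N w c s x = (\<lambda>p\<in>Jn n N. if snd p = 0 then c * x p - s * qf w N x (fst p)
       else x p + w (snd p) * (s * x (fst p, 0) + (c - 1) * qf w N x (fst p)))"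

abbreviation "LJ n N \<equiv> PiM (Jn n N) (\<lambda>_. lborel :: real measure)"

lemma finite_Jn[simp]: "finite (Jn n N)" by (simp add: Jn_def)

lemma shA_preserves: "distr (LJ n N) (LJ n N) (shA n N w t) = LJ n N"
proof -
  let ?I1 = "{p\<in>Jn n N. snd p = 0}"
  have eq: "shA n N w t = (\<lambda>x. \<lambda>p\<in>Jn n N. if p \<in> ?I1 then x p + (\<lambda>y p. t * qf w N y (fst p)) (restrict x (Jn n N - ?I1)) p else x p)"
    by (auto simp: shA_def qf_def Jn_def fun_eq_iff intro!: sum.cong)
  show ?thesis unfolding eq
  proof (rule PiM_lborel_shear)
    fix p assume p: "p \<in> ?I1"
    have "(\<lambda>y. y (fst p, l)) \<in> borel_measurable (PiM (Jn n N - ?I1) (\<lambda>_. lborel))" if "l \<in> {1..N}" for l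
      using measurable_component_singleton[of "(fst p, l)" "Jn n N - ?I1" "\<lambda>_. lborel::real measure"] p that
      by (auto simp: Jn_def)
    then show "(\<lambda>y. t * qf w N y (fst p)) \<in> borel_measurable (PiM (Jn n N - ?I1) (\<lambda>_. lborel))"
      unfolding qf_def by (intro borel_measurable_sum borel_measurable_times) auto
  qed auto
qed

lemma shB_preserves: "distr (LJ n N) (LJ n N) (shB n N w s) = LJ n N"
proof -
  let ?I1 = "{p\<in>Jn n N. snd p \<noteq> 0}"
  have eq: "shB n N w s = (\<lambda>x. \<lambda>p\<in>Jn n N. if p \<in> ?I1 then x p + (\<lambda>y p. s * w (snd p) * y (fst p, 0)) (restrict x (Jn n N - ?I1)) p else x p)"
    by (auto simp: shB_def Jn_def fun_eq_iff)
  show ?thesis unfolding eq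
  proof (rule PiM_lborel_shear)
    fix p assume p: "p \<in> ?I1"
    have "(\<lambda>y. y (fst p, 0)) \<in> borel_measurable (PiM (Jn n N - ?I1) (\<lambda>_. lborel))"
      using measurable_component_singleton[of "(fst p, 0)" "Jn n N - ?I1" "\<lambda>_. lborel::real measure"] p
      by (auto simp: Jn_def)
    then show "(\<lambda>y. s * w (snd p) * y (fst p, 0)) \<in> borel_measurable (PiM (Jn n N - ?I1) (\<lambda>_. lborel))"
      by (intro borel_measurable_times) auto
  qed auto
qed

lemma qf_shA: "i < n \<Longrightarrow> qf w N (shA n N w t x) i = qf w N x i"
  by (auto simp: qf_def shA_def Jn_def intro!: sum.cong)

lemma qf_shB: "i < n \<Longrightarrow> qf w N (shB n N w s x) i = qf w N x i + s * x (i, 0) * (\<Sum>l\<in>{1..N}. (w l)\<^sup>2)"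
  by (auto simp: qf_def shB_def Jn_def sum.distrib sum_distrib_left power2_eq_square algebra_simps intro!: sum.cong)

lemma Rot_decomp:
  assumes cs: "c\<^sup>2 + s\<^sup>2 = 1" and c: "c > -1" and W: "(\<Sum>l\<in>{1..N}. (w l)\<^sup>2) = 1 \<or> s = 0"
    and t: "t = - s / (1 + c)"
  shows "Rot n N w c s x = shA n N w t (shB n N w s (shA n N w t x))"
proof -
  have st: "s * t = c - 1"
  proof -
    have "s * t = - (s\<^sup>2) / (1 + c)" by (simp add: t power2_eq_square)
    also have "\<dots> = - (1 - c\<^sup>2) / (1 + c)" using cs by (metis add_diff_cancel_left')
    also have "\<dots> = c - 1" using c by (simp add: field_simps power2_eq_square)
    finally show ?thesis .
  qed
  have t1c: "t * (1 + c) = - s" using c by (simp add: t)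
  show ?thesis
  proof (rule ext)
    fix p :: "nat \<times> nat"
    obtain i k where p: "p = (i, k)" by force
    show "Rot n N w c s x p = shA n N w t (shB n N w s (shA n N w t x)) p"
    proof (cases "p \<in> Jn n N")
      case False then show ?thesis by (simp add: Rot_def shA_def)
    next
      case True
      then have i: "i < n" and k: "k \<le> N" by (auto simp: p Jn_def)
      have in0: "(i, 0) \<in> Jn n N" using i by (simp add: Jn_def)
      show ?thesis
      proof (cases "k = 0")
        case True
        let ?q = "qf w N x i" and ?W = "\<Sum>l\<in>{1..N}. (w l)\<^sup>2"
        have rhs: "shA n N w t (shB n N w s (shA n N w t x)) p = x (i,0) + t * ?q + t * (?q + s * (x (i,0) + t * ?q) * ?W)"
        proof -
          have e1: "shA n N w t (shB n N w s (shA n N w t x)) p = shB n N w s (shA n N w t x) (i,0) + t * qf w N (shB n N w s (shA n N w t x)) i"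
            using True \<open>p \<in> Jn n N\<close> by (simp add: p shA_def)
          have e2: "shB n N w s (shA n N w t x) (i,0) = x (i,0) + t * ?q"
            using in0 by (simp add: shA_def shB_def)
          have e3: "shA n N w t x (i,0) = x (i,0) + t * ?q"
            using in0 by (simp add: shA_def)
          show ?thesis unfolding e1 e2 qf_shB[OF i] qf_shA[OF i] e3 by simp
        qed
        have "c * x (i,0) - s * ?q = x (i,0) + t * ?q + t * (?q + s * (x (i,0) + t * ?q) * ?W)"
          using W
        proof
          assume W1: "?W = 1"
          have eA: "x (i,0) + t * ?q + t * (?q + s * (x (i,0) + t * ?q) * ?W) = x (i,0) * (1 + s * t) + ?q * (t * (2 + s * t))"
            using W1 by (simp add: algebra_simps)
          have h1: "1 + s * t = c" using st by simp
          have h2: "t * (2 + s * t) = - s"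
          proof -
            have h: "2 + s * t = 1 + c" using st by simp
            show ?thesis unfolding h by (rule t1c)
          qed
          show ?thesis by (simp only: eA h1 h2) simp
        next
          assume s0: "s = 0"
          then have "c\<^sup>2 = 1" using cs by simp
          then have "c = 1 \<or> c = -1" by (simp add: power2_eq_1_iff)
          then have "c = 1" using c by auto
          then show ?thesis using s0 t by simp
        qed
        then show ?thesis using rhs True \<open>p \<in> Jn n N\<close> by (simp add: Rot_def p)
      next
        case False
        have "shA n N w t (shB n N w s (shA n N w t x)) p = x (i,k) + s * w k * (x (i,0) + t * qf w N x i)"
          using False \<open>p \<in> Jn n N\<close> in0 by (simp add: p shA_def shB_def)
        also have "\<dots> = x (i,k) + w k * (s * x (i,0) + (s * t) * qf w N x i)"
          by (simp add: algebra_simps)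
        also have "\<dots> = x (i,k) + w k * (s * x (i,0) + (c - 1) * qf w N x i)"
          unfolding st ..
        finally show ?thesis using False \<open>p \<in> Jn n N\<close> by (simp add: Rot_def p)
      qed
    qed
  qed
qed

lemma shA_meas: "shA n N w t \<in> measurable (LJ n N) (LJ n N)"
  unfolding shA_def
proof (rule measurable_restrict)
  fix p assume p: "p \<in> Jn n N"
  have c: "q \<in> Jn n N \<Longrightarrow> (\<lambda>x. x q) \<in> borel_measurable (LJ n N)" for q
    using measurable_component_singleton[of q "Jn n N" "\<lambda>_. lborel::real measure"] by simp
  have "(\<lambda>x. qf w N x (fst p)) \<in> borel_measurable (LJ n N)"
    unfolding qf_def using p by (intro borel_measurable_sum borel_measurable_times c) (auto simp: Jn_def)
  then show "(\<lambda>x. if snd p = 0 then x p + t * qf w N x (fst p) else x p) \<in> measurable (LJ n N) lborel"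
    using c[OF p] by simp
qed

lemma shB_meas: "shB n N w s \<in> measurable (LJ n N) (LJ n N)"
  unfolding shB_def
proof (rule measurable_restrict)
  fix p assume p: "p \<in> Jn n N"
  have c: "q \<in> Jn n N \<Longrightarrow> (\<lambda>x. x q) \<in> borel_measurable (LJ n N)" for q
    using measurable_component_singleton[of q "Jn n N" "\<lambda>_. lborel::real measure"] by simp
  have "(\<lambda>x. x (fst p, 0)) \<in> borel_measurable (LJ n N)"
    using p by (intro c) (auto simp: Jn_def)
  then show "(\<lambda>x. if snd p = 0 then x p else x p + s * w (snd p) * x (fst p, 0)) \<in> measurable (LJ n N) lborel"
    using c[OF p] by simp
qed

lemma Rot_preserves_L:
  assumes cs: "c\<^sup>2 + s\<^sup>2 = 1" and c: "c > -1" and W: "(\<Sum>l\<in>{1..N}. (w l)\<^sup>2) = 1 \<or> s = 0"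
  shows "distr (LJ n N) (LJ n N) (Rot n N w c s) = LJ n N"
proof -
  define t where "t = - s / (1 + c)"
  have eq: "Rot n N w c s = shA n N w t \<circ> shB n N w s \<circ> shA n N w t"
    using Rot_decomp[OF cs c W t_def] by (auto simp: fun_eq_iff)
  have "distr (LJ n N) (LJ n N) (shA n N w t \<circ> shB n N w s \<circ> shA n N w t)
     = distr (distr (LJ n N) (LJ n N) (shA n N w t)) (LJ n N) (shA n N w t \<circ> shB n N w s)"
    by (rule distr_distr[symmetric, OF measurable_comp[OF shB_meas shA_meas] shA_meas])
  also have "\<dots> = distr (LJ n N) (LJ n N) (shA n N w t \<circ> shB n N w s)"
    by (simp add: shA_preserves)
  also have "\<dots> = distr (distr (LJ n N) (LJ n N) (shB n N w s)) (LJ n N) (shA n N w t)"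
    by (rule distr_distr[symmetric, OF shA_meas shB_meas])
  also have "\<dots> = LJ n N" by (simp add: shA_preserves shB_preserves)
  finally show ?thesis by (simp add: eq)
qed

lemma sum_Jn: "(\<Sum>p\<in>Jn n N. f p) = (\<Sum>i<n. f (i, 0) + (\<Sum>k\<in>{1..N}. f (i, k)))"
proof -
  have "(\<Sum>p\<in>Jn n N. f p) = (\<Sum>i\<in>{0..<n}. \<Sum>k\<in>{0..<Suc N}. f (i, k))"
    unfolding Jn_def by (subst sum.cartesian_product) (simp add: case_prod_unfold)
  also have "\<dots> = (\<Sum>i<n. f (i, 0) + (\<Sum>k\<in>{1..N}. f (i, k)))"
  proof (intro sum.cong)
    fix i
    have "{0..<Suc N} = insert 0 {1..N}" by auto
    then show "(\<Sum>k\<in>{0..<Suc N}. f (i, k)) = f (i, 0) + (\<Sum>k\<in>{1..N}. f (i, k))" by simp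
  qed auto
  finally show ?thesis .
qed

lemma Rot_sumsq:
  assumes cs: "c\<^sup>2 + s\<^sup>2 = 1" and c: "c > -1" and W: "(\<Sum>l\<in>{1..N}. (w l)\<^sup>2) = 1 \<or> s = 0"
  shows "(\<Sum>p\<in>Jn n N. (Rot n N w c s x p)\<^sup>2) = (\<Sum>p\<in>Jn n N. (x p)\<^sup>2)"
proof -
  have row: "(c * x (i,0) - s * qf w N x i)\<^sup>2 + (\<Sum>k\<in>{1..N}. (x (i,k) + w k * (s * x (i, 0) + (c - 1) * qf w N x i))\<^sup>2)
      = (x (i,0))\<^sup>2 + (\<Sum>k\<in>{1..N}. (x (i,k))\<^sup>2)" for i
  proof -
    define q where "q = qf w N x i"
    define D where "D = s * x (i, 0) + (c - 1) * q"
    define W' where "W' = (\<Sum>l\<in>{1..N}. (w l)\<^sup>2)"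
    have "(\<Sum>k\<in>{1..N}. (x (i,k) + w k * D)\<^sup>2) = (\<Sum>k\<in>{1..N}. (x (i,k))\<^sup>2 + 2 * D * (w k * x (i,k)) + D\<^sup>2 * (w k)\<^sup>2)"
      by (intro sum.cong) (auto simp: power2_eq_square algebra_simps)
    also have "\<dots> = (\<Sum>k\<in>{1..N}. (x (i,k))\<^sup>2) + 2 * D * q + D\<^sup>2 * W'"
      by (simp add: sum.distrib sum_distrib_left q_def qf_def W'_def)
    finally have S: "(\<Sum>k\<in>{1..N}. (x (i,k) + w k * D)\<^sup>2) = (\<Sum>k\<in>{1..N}. (x (i,k))\<^sup>2) + 2 * D * q + D\<^sup>2 * W'" .
    have key: "(c * x (i,0) - s * q)\<^sup>2 + 2 * D * q + D\<^sup>2 * W' = (x (i,0))\<^sup>2"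
      using W
    proof
      assume W1: "(\<Sum>l\<in>{1..N}. (w l)\<^sup>2) = 1"
      have id: "(c * x (i,0) - s * q)\<^sup>2 + 2 * D * q + D\<^sup>2 = (c\<^sup>2 + s\<^sup>2) * (x (i,0))\<^sup>2 + (c\<^sup>2 + s\<^sup>2 - 1) * q\<^sup>2"
        unfolding D_def by (simp add: power2_eq_square algebra_simps)
      show ?thesis using W1 id cs by (simp add: W'_def)
    next
      assume s0: "s = 0"
      then have "c\<^sup>2 = 1" using cs by simp
      then have "c = 1 \<or> c = -1" by (simp add: power2_eq_1_iff)
      then have "c = 1" using c by auto
      then show ?thesis using s0 by (simp add: D_def)
    qed
    show ?thesis using S key by (simp add: D_def q_def)
  qed
  have "(\<Sum>p\<in>Jn n N. (Rot n N w c s x p)\<^sup>2) = (\<Sum>i<n. (c * x (i,0) - s * qf w N x i)\<^sup>2 + (\<Sum>k\<in>{1..N}. (x (i,k) + w k * (s * x (i, 0) + (c - 1) * qf w N x i))\<^sup>2))"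
    unfolding sum_Jn by (intro sum.cong refl arg_cong2[where f="(+)"] sum.cong) (auto simp: Rot_def Jn_def)
  also have "\<dots> = (\<Sum>p\<in>Jn n N. (x p)\<^sup>2)"
    unfolding sum_Jn by (rule sum.cong[OF refl row])
  finally show ?thesis .
qed

abbreviation "GJ n N \<equiv> PiM (Jn n N) (\<lambda>_. gauss 0 1)"

lemma GJ_density: "GJ n N = density (LJ n N) (\<lambda>x. \<Prod>p\<in>Jn n N. ennreal (normal_density 0 1 (x p)))"
  unfolding gauss_def
proof (rule PiM_density_lborel)
  have "prob_space (density lborel (\<lambda>x. ennreal (normal_density 0 1 x)))"
    by (rule prob_space_normal_density) simp
  then show "sigma_finite_measure (density lborel (\<lambda>x. ennreal (normal_density 0 1 x)))"
    by (rule prob_space_imp_sigma_finite)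
qed auto

lemma prod_nd:
  assumes "finite A"
  shows "(\<Prod>p\<in>A. ennreal (normal_density 0 1 (x p))) = ennreal ((1 / sqrt (2 * pi)) ^ card A * exp (- (\<Sum>p\<in>A. (x p)\<^sup>2) / 2))"
proof -
  have "(\<Prod>p\<in>A. ennreal (normal_density 0 1 (x p))) = ennreal (\<Prod>p\<in>A. normal_density 0 1 (x p))"
    by (rule prod_ennreal) simp
  also have "(\<Prod>p\<in>A. normal_density 0 1 (x p)) = (\<Prod>p\<in>A. (1 / sqrt (2 * pi)) * exp (- (x p)\<^sup>2 / 2))"
    by (simp add: normal_density_def)
  also have "\<dots> = (\<Prod>p\<in>A. (1 / sqrt (2 * pi))) * (\<Prod>p\<in>A. exp (- (x p)\<^sup>2 / 2))"
    by (rule prod.distrib)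
  also have "(\<Prod>p\<in>A. exp (- (x p)\<^sup>2 / 2)) = exp (\<Sum>p\<in>A. - (x p)\<^sup>2 / 2)"
    using assms by (simp add: exp_sum)
  also have "(\<Sum>p\<in>A. - (x p)\<^sup>2 / 2) = - (\<Sum>p\<in>A. (x p)\<^sup>2) / 2"
    by (simp add: sum_negf sum_divide_distrib)
  also have "(\<Prod>p\<in>A. (1 / sqrt (2 * pi))) = (1 / sqrt (2 * pi)) ^ card A" by simp
  finally show ?thesis .
qed

lemma Rot_meas:
  assumes cs: "c\<^sup>2 + s\<^sup>2 = 1" and c: "c > -1" and W: "(\<Sum>l\<in>{1..N}. (w l)\<^sup>2) = 1 \<or> s = 0"
  shows "Rot n N w c s \<in> measurable (LJ n N) (LJ n N)"
proof -
  define t where "t = - s / (1 + c)"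
  have eq: "Rot n N w c s = shA n N w t \<circ> shB n N w s \<circ> shA n N w t"
    using Rot_decomp[OF cs c W t_def] by (auto simp: fun_eq_iff)
  show ?thesis unfolding eq by (rule measurable_comp[OF shA_meas measurable_comp[OF shB_meas shA_meas]])
qed

lemma Rot_gauss:
  assumes cs: "c\<^sup>2 + s\<^sup>2 = 1" and c: "c > -1" and W: "(\<Sum>l\<in>{1..N}. (w l)\<^sup>2) = 1 \<or> s = 0"
  shows "distr (GJ n N) (GJ n N) (Rot n N w c s) = GJ n N"
proof -
  define f where "f = (\<lambda>x. \<Prod>p\<in>Jn n N. ennreal (normal_density 0 1 (x p)))"
  have fm: "f \<in> borel_measurable (LJ n N)" unfolding f_def by measurable
  have Rm: "Rot n N w c s \<in> measurable (LJ n N) (LJ n N)" by (rule Rot_meas[OF cs c W])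
  have fR: "f (Rot n N w c s x) = f x" for x
    unfolding f_def prod_nd[OF finite_Jn] Rot_sumsq[OF cs c W] ..
  have "density (LJ n N) f = density (distr (LJ n N) (LJ n N) (Rot n N w c s)) f"
    by (simp add: Rot_preserves_L[OF cs c W])
  also have "\<dots> = distr (density (LJ n N) (\<lambda>x. f (Rot n N w c s x))) (LJ n N) (Rot n N w c s)"
    by (rule density_distr[OF fm Rm])
  also have "\<dots> = distr (density (LJ n N) f) (LJ n N) (Rot n N w c s)"
    by (simp add: fR)
  finally have *: "distr (density (LJ n N) f) (LJ n N) (Rot n N w c s) = density (LJ n N) f" by (rule sym)
  have "distr (GJ n N) (GJ n N) (Rot n N w c s) = distr (density (LJ n N) f) (LJ n N) (Rot n N w c s)"
    unfolding GJ_density f_def by (rule distr_cong) auto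
  also have "\<dots> = GJ n N" by (simp only: *) (simp add: GJ_density f_def)
  finally show ?thesis .
qed

lemma gauss_prob[simp]: "\<sigma> > 0 \<Longrightarrow> prob_space (gauss \<mu> \<sigma>)"
  unfolding gauss_def by (rule prob_space_normal_density)

lemma sets_gauss[simp, measurable_cong]: "sets (gauss \<mu> \<sigma>) = sets borel"
  by (simp add: gauss_def)

lemma measurable_gauss2[simp]: "measurable M (gauss \<mu> \<sigma>) = measurable M borel"
  by (rule measurable_cong_sets) simp_all

lemma measurable_gauss1[simp]: "measurable (gauss \<mu> \<sigma>) M = measurable borel M"
  by (rule measurable_cong_sets) simp_all

lemma space_gauss[simp]: "space (gauss \<mu> \<sigma>) = UNIV"
  by (simp add: gauss_def)

lemma coord_indep:
  assumes P: "\<And>i. i \<in> I \<Longrightarrow> prob_space (Mi i)" and I: "I \<noteq> {}"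
  shows "prob_space.indep_vars (PiM I Mi) Mi (\<lambda>i x. x i) I"
proof -
  interpret prob_space "PiM I Mi" by (rule prob_space_PiM[OF P])
  show ?thesis
  proof (rule indep_vars_iff_distr_eq_PiM'[THEN iffD2, OF I])
    show "random_variable (Mi i) (\<lambda>x. x i)" if "i \<in> I" for i using that by measurable
    have "distr (PiM I Mi) (PiM I Mi) (\<lambda>x. \<lambda>i\<in>I. x i) = distr (PiM I Mi) (PiM I Mi) (\<lambda>x. x)"
      by (rule distr_cong) (auto simp: space_PiM PiE_def extensional_restrict)
    also have "\<dots> = PiM I Mi" by simp
    also have "\<dots> = PiM I (\<lambda>i. distr (PiM I Mi) (Mi i) (\<lambda>x. x i))"
      by (rule PiM_cong) (auto simp: distr_PiM_component P)
    finally show "distr (PiM I Mi) (PiM I Mi) (\<lambda>x. \<lambda>i\<in>I. x i) = PiM I (\<lambda>i. distr (PiM I Mi) (Mi i) (\<lambda>x. x i))" .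
  qed
qed

lemma PiM_gauss_indep_blocks:
  fixes K :: "'j \<Rightarrow> 'i set" and Y :: "'j \<Rightarrow> ('i \<Rightarrow> real) \<Rightarrow> real"
  assumes KI: "\<And>j. j \<in> L \<Longrightarrow> K j \<subseteq> I" and disj: "disjoint_family_on K L" and I: "I \<noteq> {}"
    and Y: "\<And>j. j \<in> L \<Longrightarrow> Y j \<in> borel_measurable (PiM (K j) (\<lambda>_. gauss 0 1))"
  shows "prob_space.indep_vars (PiM I (\<lambda>_. gauss 0 1)) (\<lambda>_. borel) (\<lambda>j x. Y j (restrict x (K j))) L"
proof -
  interpret prob_space "PiM I (\<lambda>_. gauss 0 1)" by (rule prob_space_PiM) simp
  have ci: "indep_vars (\<lambda>_. gauss 0 1) (\<lambda>i x. x i) I"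
    by (rule coord_indep[OF _ I]) simp
  have "indep_vars (\<lambda>j. PiM (K j) (\<lambda>_. gauss 0 1)) (\<lambda>j \<omega>. restrict (\<lambda>i. \<omega> i) (K j)) L"
    by (rule indep_vars_restrict[OF ci KI disj])
  then have "indep_vars (\<lambda>_. borel) (\<lambda>j \<omega>. Y j (restrict (\<lambda>i. \<omega> i) (K j))) L"
    by (rule indep_vars_compose2) (rule Y)
  then show ?thesis by simp
qed

lemma weighted_sum_gauss:
  fixes e :: "'j \<Rightarrow> 'i" and u :: "'j \<Rightarrow> real"
  assumes fin: "finite F" and inj: "inj_on e F" and eI: "e ` F \<subseteq> I" and u: "(\<Sum>j\<in>F. (u j)\<^sup>2) = 1"
  shows "distr (PiM I (\<lambda>_. gauss 0 1)) borel (\<lambda>b. \<Sum>j\<in>F. u j * b (e j)) = gauss 0 1"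
proof -
  let ?P = "PiM I (\<lambda>_. gauss 0 1)"
  interpret prob_space ?P by (rule prob_space_PiM) simp
  define F' where "F' = {j\<in>F. u j \<noteq> 0}"
  have F'F: "F' \<subseteq> F" by (auto simp: F'_def)
  have finF': "finite F'" using fin F'F by (rule finite_subset[rotated])
  have sumF: "(\<Sum>j\<in>F. f j * u j) = (\<Sum>j\<in>F'. f j * u j)" for f :: "'j \<Rightarrow> real"
    by (rule sum.mono_neutral_right[OF fin F'F]) (auto simp: F'_def)
  have u': "(\<Sum>j\<in>F'. (u j)\<^sup>2) = 1"
    using u sumF[of "\<lambda>j. u j"] by (simp add: power2_eq_square)
  have F'ne: "F' \<noteq> {}" using u' by auto
  have Ine: "I \<noteq> {}" using F'ne F'F eI by auto
  have ind0: "indep_vars (\<lambda>_. borel) (\<lambda>j x. (\<lambda>f. u j * f (e j)) (restrict x {e j})) F'"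
  proof (rule PiM_gauss_indep_blocks[OF _ _ Ine])
    show "{e j} \<subseteq> I" if "j \<in> F'" for j using that F'F eI by auto
    show "disjoint_family_on (\<lambda>j. {e j}) F'"
      using inj_on_subset[OF inj F'F] by (auto simp: disjoint_family_on_def inj_on_def)
    show "(\<lambda>f. u j * f (e j)) \<in> borel_measurable (PiM {e j} (\<lambda>_. gauss 0 1))" for j
      by measurable
  qed
  have ind: "indep_vars (\<lambda>_. borel) (\<lambda>j x. u j * x (e j)) F'"
    using ind0 by (rule indep_vars_cong[THEN iffD1, rotated -1]) auto
  have coord: "distributed ?P lborel (\<lambda>x. x (e j)) (normal_density 0 1)" if "j \<in> F'" for j
  proof -
    have ej: "e j \<in> I" using that F'F eI by auto
    have "distr ?P lborel (\<lambda>x. x (e j)) = distr ?P (gauss 0 1) (\<lambda>x. x (e j))"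
      by (rule distr_cong) auto
    also have "\<dots> = gauss 0 1" by (rule distr_PiM_component) (auto simp: ej)
    finally show ?thesis unfolding distributed_def gauss_def using ej by auto
  qed
  have norm: "distributed ?P lborel (\<lambda>x. u j * x (e j)) (normal_density 0 \<bar>u j\<bar>)" if "j \<in> F'" for j
    using normal_density_affine[OF coord[OF that], of "u j" 0] that by (simp add: F'_def)
  have "distributed ?P lborel (\<lambda>x. \<Sum>j\<in>F'. u j * x (e j)) (normal_density (\<Sum>j\<in>F'. 0) (sqrt (\<Sum>j\<in>F'. \<bar>u j\<bar>\<^sup>2)))"
    by (rule sum_indep_normal[OF finF' F'ne ind]) (auto simp: F'_def norm)
  then have D: "distributed ?P lborel (\<lambda>x. \<Sum>j\<in>F'. u j * x (e j)) (normal_density 0 1)"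
    using u' by simp
  have "distr ?P borel (\<lambda>b. \<Sum>j\<in>F. u j * b (e j)) = distr ?P lborel (\<lambda>x. \<Sum>j\<in>F'. u j * x (e j))"
    using sumF[of "\<lambda>j. _ (e j)"] by (intro distr_cong) (auto simp: mult.commute)
  also have "\<dots> = gauss 0 1" using D by (simp add: distributed_def gauss_def)
  finally show ?thesis .
qed

lemma prob_space_eq_PiM_empty:
  assumes P: "prob_space P" and Q: "prob_space Q" and S: "sets P = sets (PiM {} M)" and S2: "sets Q = sets (PiM {} M)"
  shows "P = Q"
proof (rule measure_eqI)
  show "sets P = sets Q" using S S2 by simp
  fix A assume A: "A \<in> sets P"
  have sp: "space P = {\<lambda>_. undefined}" "space Q = {\<lambda>_. undefined}"
    using sets_eq_imp_space_eq[OF S] sets_eq_imp_space_eq[OF S2] by (simp_all add: PiM_empty)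
  have "A \<subseteq> {\<lambda>_. undefined}" using sets.sets_into_space[OF A] sp by simp
  then have "A = {} \<or> A = {\<lambda>_. undefined}" by auto
  then show "emeasure P A = emeasure Q A"
    using prob_space.emeasure_space_1[OF P] prob_space.emeasure_space_1[OF Q] sp by auto
qed

lemma proj_gauss:
  fixes u :: "nat \<Rightarrow> real" and n N :: nat
  assumes u: "(\<Sum>i<n. (u i)\<^sup>2) = 1"
  shows "distr (PiM ({0..<n} \<times> {1..N}) (\<lambda>_. gauss 0 1)) (PiM {0..<N} (\<lambda>_. gauss 0 1))
           (\<lambda>b. \<lambda>k\<in>{0..<N}. \<Sum>i<n. u i * b (i, Suc k)) = PiM {0..<N} (\<lambda>_. gauss 0 1)"
proof -
  let ?P = "PiM ({0..<n} \<times> {1..N}) (\<lambda>_. gauss 0 1)"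
  let ?X = "\<lambda>k b. \<Sum>i<n. u i * b (i, Suc k)"
  interpret prob_space ?P by (rule prob_space_PiM) simp
  have Xk: "?X k \<in> borel_measurable ?P" if k: "k \<in> {0..<N}" for k
  proof -
    have "(\<lambda>b. b (i, Suc k)) \<in> borel_measurable ?P" if "i < n" for i
      using measurable_component_singleton[of "(i, Suc k)" "{0..<n} \<times> {1..N}" "\<lambda>_. gauss 0 1"] that k
      by simp
    then show ?thesis by simp
  qed
  have Xm: "(\<lambda>b. \<lambda>k\<in>{0..<N}. ?X k b) \<in> measurable ?P (PiM {0..<N} (\<lambda>_. gauss 0 1))"
    by (rule measurable_restrict) (simp add: Xk)
  show ?thesis
  proof (cases "N = 0")
    case True
    have p1: "prob_space (distr ?P (PiM {0..<N} (\<lambda>_. gauss 0 1)) (\<lambda>b. \<lambda>k\<in>{0..<N}. ?X k b))"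
      by (rule prob_space_distr[OF Xm])
    have p2: "prob_space (PiM {0..<N} (\<lambda>_. gauss 0 1 :: real measure))" by (rule prob_space_PiM) simp
    show ?thesis
      by (rule prob_space_eq_PiM_empty[OF p1 p2, where M="\<lambda>_. gauss 0 1"]) (simp_all add: True)
  next
    case False
    have n: "n > 0" using u by (cases n) auto
    have Ine: "{0..<n} \<times> {1..N} \<noteq> {}" using n False by auto
    have Kne: "{0..<N} \<noteq> {}" using False by auto
    have ind0: "indep_vars (\<lambda>_. borel) (\<lambda>k x. (\<lambda>f. \<Sum>i<n. u i * f (i, Suc k)) (restrict x ({0..<n} \<times> {Suc k}))) {0..<N}"
    proof (rule PiM_gauss_indep_blocks[OF _ _ Ine])
      show "{0..<n} \<times> {Suc k} \<subseteq> {0..<n} \<times> {1..N}" if "k \<in> {0..<N}" for k using that by auto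
      show "disjoint_family_on (\<lambda>k. {0..<n} \<times> {Suc k}) {0..<N}"
        by (auto simp: disjoint_family_on_def)
      fix k
      have "(\<lambda>f. f (i, Suc k)) \<in> borel_measurable (PiM ({0..<n} \<times> {Suc k}) (\<lambda>_. gauss 0 1))" if "i < n" for i
        using measurable_component_singleton[of "(i, Suc k)" "{0..<n} \<times> {Suc k}" "\<lambda>_. gauss 0 1"] that
        by simp
      then show "(\<lambda>f. \<Sum>i<n. u i * f (i, Suc k)) \<in> borel_measurable (PiM ({0..<n} \<times> {Suc k}) (\<lambda>_. gauss 0 1))"
        by (intro borel_measurable_sum borel_measurable_times) auto
    qed
    have ind: "indep_vars (\<lambda>_. borel) ?X {0..<N}"
      using ind0 by (rule indep_vars_cong[THEN iffD1, rotated -1]) (auto intro!: ext sum.cong)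
    have rv: "random_variable borel (?X k)" if "k \<in> {0..<N}" for k
      using Xk[OF that] by simp
    have D: "distr ?P (PiM {0..<N} (\<lambda>_. borel)) (\<lambda>x. \<lambda>k\<in>{0..<N}. ?X k x) = PiM {0..<N} (\<lambda>k. distr ?P borel (?X k))"
      by (rule indep_vars_iff_distr_eq_PiM'[THEN iffD1, OF Kne rv ind])
    have G: "distr ?P borel (?X k) = gauss 0 1" if "k \<in> {0..<N}" for k
      by (rule weighted_sum_gauss[where e="\<lambda>i. (i, Suc k)" and F="{..<n}", OF _ _ _ u]) (use that in \<open>auto simp: inj_on_def\<close>)
    have "distr ?P (PiM {0..<N} (\<lambda>_. gauss 0 1)) (\<lambda>b. \<lambda>k\<in>{0..<N}. ?X k b) = distr ?P (PiM {0..<N} (\<lambda>_. borel)) (\<lambda>x. \<lambda>k\<in>{0..<N}. ?X k x)"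
      by (rule distr_cong) (auto intro!: sets_PiM_cong)
    also have "\<dots> = PiM {0..<N} (\<lambda>_. gauss 0 1)"
      unfolding D by (rule PiM_cong[OF refl G])
    finally show ?thesis .
  qed
qed

lemma gauss_scale:
  assumes a: "a > 0"
  shows "distr (gauss 0 1) borel (\<lambda>x. a * x) = gauss 0 a"
proof -
  interpret prob_space "gauss 0 1" by simp
  have d: "distributed (gauss 0 1) lborel (\<lambda>x. x) (normal_density 0 1)"
    unfolding distributed_def by (auto simp: gauss_def distr_id2)
  have "distributed (gauss 0 1) lborel (\<lambda>x. 0 + a * x) (normal_density (0 + a * 0) (\<bar>a\<bar> * 1))"
    by (rule normal_density_affine[OF d]) (use a in auto)
  then have "distr (gauss 0 1) lborel (\<lambda>x. a * x) = gauss 0 a"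
    using a by (simp add: distributed_def gauss_def)
  moreover have "distr (gauss 0 1) borel (\<lambda>x. a * x) = distr (gauss 0 1) lborel (\<lambda>x. a * x)"
    by (rule distr_cong) auto
  ultimately show ?thesis by simp
qed

lemma reindex_scale:
  assumes a: "a > 0" and inj: "inj_on f K" and fK: "f ` K \<subseteq> I" and fin: "finite K"
  shows "distr (PiM I (\<lambda>_. gauss 0 1)) (PiM K (\<lambda>_. gauss 0 a)) (\<lambda>x. \<lambda>k\<in>K. a * x (f k)) = PiM K (\<lambda>_. gauss 0 a)"
proof -
  have R: "distr (PiM I (\<lambda>_. gauss 0 1)) (PiM K (\<lambda>_. gauss 0 1)) (\<lambda>\<omega>. \<lambda>k\<in>K. \<omega> (f k)) = PiM K (\<lambda>_. gauss 0 1)"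
    using distr_PiM_reindex[of I "\<lambda>_. gauss 0 1" f K] inj fK by auto
  have Rm: "(\<lambda>\<omega>. \<lambda>k\<in>K. \<omega> (f k)) \<in> measurable (PiM I (\<lambda>_. gauss 0 1)) (PiM K (\<lambda>_. gauss 0 1))"
    using fK by (intro measurable_restrict measurable_component_singleton) auto
  have Cm: "compose K (\<lambda>v. a * v) \<in> measurable (PiM K (\<lambda>_. gauss 0 1)) (PiM K (\<lambda>_. gauss 0 a))"
    unfolding compose_def by (intro measurable_restrict) (simp add: measurable_component_singleton)
  have "distr (PiM I (\<lambda>_. gauss 0 1)) (PiM K (\<lambda>_. gauss 0 a)) (\<lambda>x. \<lambda>k\<in>K. a * x (f k))
      = distr (PiM I (\<lambda>_. gauss 0 1)) (PiM K (\<lambda>_. gauss 0 a)) (compose K (\<lambda>v. a * v) \<circ> (\<lambda>\<omega>. \<lambda>k\<in>K. \<omega> (f k)))"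
    by (rule distr_cong) (auto simp: compose_def fun_eq_iff)
  also have "\<dots> = distr (distr (PiM I (\<lambda>_. gauss 0 1)) (PiM K (\<lambda>_. gauss 0 1)) (\<lambda>\<omega>. \<lambda>k\<in>K. \<omega> (f k))) (PiM K (\<lambda>_. gauss 0 a)) (compose K (\<lambda>v. a * v))"
    by (rule distr_distr[symmetric, OF Cm Rm])
  also have "\<dots> = distr (PiM K (\<lambda>_. gauss 0 1)) (PiM K (\<lambda>_. gauss 0 a)) (compose K (\<lambda>v. a * v))"
    by (simp add: R)
  also have "\<dots> = PiM K (\<lambda>_. distr (gauss 0 1) (gauss 0 a) (\<lambda>v. a * v))"
    by (rule distr_PiM_finite_prob_space'[OF fin]) (use a in auto)
  also have "\<dots> = PiM K (\<lambda>_. gauss 0 a)"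
  proof -
    have "distr (gauss 0 1) (gauss 0 a) (\<lambda>v. a * v) = distr (gauss 0 1) borel (\<lambda>v. a * v)"
      by (rule distr_cong) auto
    then show ?thesis using gauss_scale[OF a] by simp
  qed
  finally show ?thesis .
qed

lemma Jn_split: "Jn n N = ({0..<n} \<times> {1..N}) \<union> ({0..<n} \<times> {0})"
  by (auto simp: Jn_def)

lemma GJ_merge:
  assumes "I1 \<union> I2 = Jn n N" "I1 \<inter> I2 = {}"
  shows "GJ n N = distr (PiM I1 (\<lambda>_. gauss 0 1) \<Otimes>\<^sub>M PiM I2 (\<lambda>_. gauss 0 1)) (GJ n N) (merge I1 I2)"
proof -
  interpret PS: product_sigma_finite "\<lambda>_. gauss 0 1"
    by (simp add: product_sigma_finite_def prob_space_imp_sigma_finite)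
  have f: "finite I1" "finite I2" using assms(1) finite_Jn by (metis finite_Un)+
  show ?thesis using PS.distr_merge[OF assms(2) f] assms(1) by simp
qed

lemma comp_meas_gauss: "i \<in> I \<Longrightarrow> (\<lambda>x. x i) \<in> borel_measurable (PiM I (\<lambda>_. gauss \<mu> s))"
  using measurable_component_singleton[of i I "\<lambda>_. gauss \<mu> s"] by simp

definition Phi :: "nat \<Rightarrow> nat \<Rightarrow> real \<Rightarrow> (nat \<times> nat \<Rightarrow> real) \<Rightarrow> (nat \<times> nat \<Rightarrow> real) \<times> (nat \<Rightarrow> real)" where
  "Phi n N \<sigma> x = ((\<lambda>p\<in>{0..<n} \<times> {0..<N}. (1 / sqrt (real n)) * x (fst p, Suc (snd p))),
                   (\<lambda>i\<in>{0..<n}. \<sigma> * x (i, 0)))"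

abbreviation "DS n N \<sigma> \<equiv> PiM ({0..<n} \<times> {0..<N}) (\<lambda>_. gauss 0 (1 / sqrt (real n))) \<Otimes>\<^sub>M PiM {0..<n} (\<lambda>_. gauss 0 \<sigma>)"

lemma design_as_GJ:
  assumes n: "n > 0" and \<sigma>: "\<sigma> > 0"
  shows "distr (GJ n N) (DS n N \<sigma>) (Phi n N \<sigma>) = design_noise_space n N \<sigma>"
proof -
  let ?Ip = "{0..<n} \<times> {1..N}" and ?I0 = "{0..<n} \<times> {0::nat}"
  let ?G = "\<lambda>I. PiM I (\<lambda>_. gauss 0 1 :: real measure)"
  let ?f1 = "\<lambda>b. \<lambda>p\<in>{0..<n} \<times> {0..<N}. (1 / sqrt (real n)) * b (fst p, Suc (snd p))"
  let ?f2 = "\<lambda>a. \<lambda>i\<in>{0..<n}. \<sigma> * a (i, 0::nat)"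
  have M: "GJ n N = distr (?G ?Ip \<Otimes>\<^sub>M ?G ?I0) (GJ n N) (merge ?Ip ?I0)"
    by (rule GJ_merge) (auto simp: Jn_def)
  have mm: "merge ?Ip ?I0 \<in> measurable (?G ?Ip \<Otimes>\<^sub>M ?G ?I0) (GJ n N)"
    using measurable_merge[of ?Ip ?I0 "\<lambda>_. gauss 0 1"] Jn_split[of n N] by simp
  have f1m: "?f1 \<in> measurable (?G ?Ip) (PiM ({0..<n} \<times> {0..<N}) (\<lambda>_. gauss 0 (1 / sqrt (real n))))"
  proof (rule measurable_restrict)
    fix p assume p: "p \<in> {0..<n} \<times> {0..<N}"
    have "(\<lambda>b. b (fst p, Suc (snd p))) \<in> borel_measurable (?G ?Ip)" by (rule comp_meas_gauss) (use p in auto)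
    then show "(\<lambda>b. (1 / sqrt (real n)) * b (fst p, Suc (snd p))) \<in> measurable (?G ?Ip) (gauss 0 (1 / sqrt (real n)))" by simp
  qed
  have f2m: "?f2 \<in> measurable (?G ?I0) (PiM {0..<n} (\<lambda>_. gauss 0 \<sigma>))"
  proof (rule measurable_restrict)
    fix i assume i: "i \<in> {0..<n}"
    have "(\<lambda>b. b (i, 0::nat)) \<in> borel_measurable (?G ?I0)" by (rule comp_meas_gauss) (use i in auto)
    then show "(\<lambda>b. \<sigma> * b (i, 0)) \<in> measurable (?G ?I0) (gauss 0 \<sigma>)" by simp
  qed
  have Phim: "Phi n N \<sigma> \<in> measurable (GJ n N) (DS n N \<sigma>)"
    unfolding Phi_def
  proof (rule measurable_Pair)
    show "(\<lambda>x. \<lambda>p\<in>{0..<n} \<times> {0..<N}. 1 / sqrt (real n) * x (fst p, Suc (snd p))) \<in> measurable (GJ n N) (PiM ({0..<n} \<times> {0..<N}) (\<lambda>_. gauss 0 (1 / sqrt (real n))))"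
    proof (rule measurable_restrict)
      fix p assume p: "p \<in> {0..<n} \<times> {0..<N}"
      have "(\<lambda>b. b (fst p, Suc (snd p))) \<in> borel_measurable (GJ n N)" by (rule comp_meas_gauss) (use p in \<open>auto simp: Jn_def\<close>)
      then show "(\<lambda>b. (1 / sqrt (real n)) * b (fst p, Suc (snd p))) \<in> measurable (GJ n N) (gauss 0 (1 / sqrt (real n)))" by simp
    qed
    show "(\<lambda>x. \<lambda>i\<in>{0..<n}. \<sigma> * x (i, 0)) \<in> measurable (GJ n N) (PiM {0..<n} (\<lambda>_. gauss 0 \<sigma>))"
    proof (rule measurable_restrict)
      fix i assume i: "i \<in> {0..<n}"
      have "(\<lambda>b. b (i, 0::nat)) \<in> borel_measurable (GJ n N)" by (rule comp_meas_gauss) (use i in \<open>auto simp: Jn_def\<close>)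
      then show "(\<lambda>b. \<sigma> * b (i, 0)) \<in> measurable (GJ n N) (gauss 0 \<sigma>)" by simp
    qed
  qed
  have D1: "distr (?G ?Ip) (PiM ({0..<n} \<times> {0..<N}) (\<lambda>_. gauss 0 (1 / sqrt (real n)))) ?f1 = PiM ({0..<n} \<times> {0..<N}) (\<lambda>_. gauss 0 (1 / sqrt (real n)))"
    by (rule reindex_scale) (use n in \<open>auto simp: inj_on_def\<close>)
  have D2: "distr (?G ?I0) (PiM {0..<n} (\<lambda>_. gauss 0 \<sigma>)) ?f2 = PiM {0..<n} (\<lambda>_. gauss 0 \<sigma>)"
    by (rule reindex_scale) (use \<sigma> in \<open>auto simp: inj_on_def\<close>)
  have "distr (GJ n N) (DS n N \<sigma>) (Phi n N \<sigma>) = distr (?G ?Ip \<Otimes>\<^sub>M ?G ?I0) (DS n N \<sigma>) (Phi n N \<sigma> \<circ> merge ?Ip ?I0)"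
    by (subst M, rule distr_distr[OF Phim mm])
  also have "\<dots> = distr (?G ?Ip \<Otimes>\<^sub>M ?G ?I0) (DS n N \<sigma>) (\<lambda>(b, a). (?f1 b, ?f2 a))"
    by (rule distr_cong) (auto simp: Phi_def merge_def space_pair_measure fun_eq_iff)
  also have "\<dots> = distr (?G ?Ip) (PiM ({0..<n} \<times> {0..<N}) (\<lambda>_. gauss 0 (1 / sqrt (real n)))) ?f1
      \<Otimes>\<^sub>M distr (?G ?I0) (PiM {0..<n} (\<lambda>_. gauss 0 \<sigma>)) ?f2"
    by (rule pair_measure_distr[symmetric, OF f1m f2m]) (simp add: D2 prob_space_imp_sigma_finite prob_space_PiM \<sigma>)
  also have "\<dots> = design_noise_space n N \<sigma>"
    unfolding D1 D2 design_noise_space_def ..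
  finally show ?thesis .
qed

definition nrm :: "nat \<Rightarrow> (nat \<times> nat \<Rightarrow> real) \<Rightarrow> real" where
  "nrm n x = sqrt (\<Sum>i<n. (x (i, 0))\<^sup>2)"

definition Tm :: "nat \<Rightarrow> nat \<Rightarrow> (nat \<times> nat \<Rightarrow> real) \<Rightarrow> nat \<Rightarrow> real" where
  "Tm n N x = (\<lambda>k\<in>{0..<N}. \<Sum>i<n. (x (i, 0) / nrm n x) * x (i, Suc k))"

definition Hf :: "nat \<Rightarrow> (nat \<Rightarrow> real) \<Rightarrow> real \<Rightarrow> real \<Rightarrow> real \<Rightarrow> (nat \<Rightarrow> real) \<Rightarrow> (nat \<Rightarrow> real) \<times> real" where
  "Hf N w c s r g = ((\<lambda>j\<in>{0..<N}. g j + w (Suc j) * (s * r + (c - 1) * (\<Sum>l<N. w (Suc l) * g l))), r\<^sup>2)"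

definition Fd :: "nat \<Rightarrow> nat \<Rightarrow> (nat \<Rightarrow> real) \<Rightarrow> real \<Rightarrow> real \<Rightarrow> (nat \<times> nat \<Rightarrow> real) \<times> (nat \<Rightarrow> real) \<Rightarrow> (nat \<Rightarrow> real) \<times> real" where
  "Fd n N \<beta> P \<sigma> = (\<lambda>(A, w). (\<lambda>j\<in>{0..<N}. Z1 n N \<beta> A w j, (vnorm n (obs n N \<beta> A w))\<^sup>2 / (P + \<sigma>\<^sup>2)))"

lemma sum_1N_shift: "(\<Sum>l\<in>{1..N}. f l) = (\<Sum>l<N. f (Suc l))"
  using sum.atLeast1_atMost_eq[of f N] by simp

lemma qf_shift: "qf w N x i = (\<Sum>l<N. w (Suc l) * x (i, Suc l))"
  unfolding qf_def by (rule sum_1N_shift)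

lemma nrm_sq: "(nrm n x)\<^sup>2 = (\<Sum>i<n. (x (i, 0))\<^sup>2)"
  unfolding nrm_def by (simp add: sum_nonneg)

lemma FPR:
  assumes n: "n > 0" and \<sigma>: "\<sigma> > 0" and P: "P \<ge> 0"
    and S: "S = sqrt (P + \<sigma>\<^sup>2)" and c: "c = \<sigma> / S" and s: "s = sqrt P / S"
    and hw: "\<And>j. j < N \<Longrightarrow> \<beta> j / sqrt (real n) = sqrt P * w (Suc j)"
    and hW: "sqrt P * (\<Sum>l\<in>{1..N}. (w l)\<^sup>2) = sqrt P"
  shows "Fd n N \<beta> P \<sigma> (Phi n N \<sigma> (Rot n N w c s x)) = Hf N w c s (nrm n x) (Tm n N x)"
proof -
  have hW': "sqrt P * (\<Sum>l<N. (w (Suc l))\<^sup>2) = sqrt P" using hW by (simp only: sum_1N_shift)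
  define A where "A = fst (Phi n N \<sigma> (Rot n N w c s x))"
  define wv where "wv = snd (Phi n N \<sigma> (Rot n N w c s x))"
  define q where "q i = qf w N x i" for i
  define D where "D i = s * x (i, 0) + (c - 1) * q i" for i
  have Spos: "S > 0" using S \<sigma> P by (simp add: add_nonneg_pos)
  have S2: "S\<^sup>2 = P + \<sigma>\<^sup>2" using S \<sigma> P by (simp add: add_nonneg_pos)
  have sn: "sqrt (real n) > 0" using n by simp
  have A_eq: "A (i, j) = (1 / sqrt (real n)) * (x (i, Suc j) + w (Suc j) * D i)" if "i < n" "j < N" for i j
    using that by (simp add: A_def Phi_def Rot_def Jn_def D_def q_def)
  have wv_eq: "wv i = \<sigma> * (c * x (i, 0) - s * q i)" if "i < n" for i
    using that by (simp add: wv_def Phi_def Rot_def Jn_def q_def)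
  have coef1: "sqrt P * c - \<sigma> * s = 0" by (simp add: c s)
  have coef2: "sqrt P * s + \<sigma> * c = S"
  proof -
    have "sqrt P * s + \<sigma> * c = (P + \<sigma>\<^sup>2) / S" using P by (simp add: c s power2_eq_square add_divide_distrib)
    also have "\<dots> = S * S / S" using S2 by (simp add: power2_eq_square)
    also have "\<dots> = S" using Spos by simp
    finally show ?thesis .
  qed
  have obs_eq: "obs n N \<beta> A wv i = S * x (i, 0)" if i: "i < n" for i
  proof -
    have "(\<Sum>j<N. A (i, j) * \<beta> j) = (\<Sum>j<N. sqrt P * (w (Suc j) * (x (i, Suc j) + w (Suc j) * D i)))"
    proof (rule sum.cong[OF refl])
      fix j assume "j \<in> {..<N}"
      then have j: "j < N" by simp
      have "A (i, j) * \<beta> j = (\<beta> j / sqrt (real n)) * (x (i, Suc j) + w (Suc j) * D i)"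
        using A_eq[OF i j] by simp
      then show "A (i, j) * \<beta> j = sqrt P * (w (Suc j) * (x (i, Suc j) + w (Suc j) * D i))"
        using hw[OF j] by simp
    qed
    also have "\<dots> = sqrt P * (q i + D i * (\<Sum>l<N. (w (Suc l))\<^sup>2))"
      by (simp add: sum_distrib_left sum.distrib q_def qf_shift algebra_simps power2_eq_square)
    also have "\<dots> = sqrt P * q i + D i * (sqrt P * (\<Sum>l<N. (w (Suc l))\<^sup>2))" by (simp add: algebra_simps)
    also have "\<dots> = sqrt P * q i + D i * sqrt P" by (simp only: hW')
    finally have "obs n N \<beta> A wv i = sqrt P * q i + D i * sqrt P + \<sigma> * (c * x (i, 0) - s * q i)"
      using wv_eq[OF i] by (simp add: obs_def)
    also have "\<dots> = q i * (sqrt P * c - \<sigma> * s) + x (i, 0) * (sqrt P * s + \<sigma> * c)"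
      by (simp add: D_def algebra_simps)
    also have "\<dots> = S * x (i, 0)" by (simp add: coef1 coef2)
    finally show ?thesis .
  qed
  have vn: "vnorm n (obs n N \<beta> A wv) = S * nrm n x"
  proof -
    have "vnorm n (obs n N \<beta> A wv) = sqrt (\<Sum>i<n. (S * x (i, 0))\<^sup>2)"
      unfolding vnorm_def by (intro arg_cong[where f=sqrt] sum.cong) (auto simp: obs_eq)
    also have "\<dots> = sqrt (S\<^sup>2 * (\<Sum>i<n. (x (i, 0))\<^sup>2))"
      by (simp add: power_mult_distrib sum_distrib_left)
    also have "\<dots> = S * nrm n x" using Spos by (simp add: real_sqrt_mult nrm_def)
    finally show ?thesis .
  qed
  have Z: "Z1 n N \<beta> A wv j = Tm n N x j + w (Suc j) * (s * nrm n x + (c - 1) * (\<Sum>l<N. w (Suc l) * Tm n N x l))"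
    if j: "j < N" for j
  proof -
    have "Z1 n N \<beta> A wv j = sqrt (real n) * (\<Sum>i<n. A (i, j) * (S * x (i, 0))) / (S * nrm n x)"
      unfolding Z1_def vn by (simp add: obs_eq)
    also have "\<dots> = (\<Sum>i<n. (x (i, 0) / nrm n x) * (x (i, Suc j) + w (Suc j) * D i))"
    proof -
      have "sqrt (real n) * (\<Sum>i<n. A (i, j) * (S * x (i, 0))) = S * (\<Sum>i<n. x (i, 0) * (x (i, Suc j) + w (Suc j) * D i))"
        using sn by (simp add: A_eq j sum_distrib_left algebra_simps)
      then show ?thesis using Spos by (simp add: sum_divide_distrib)
    qed
    also have "\<dots> = Tm n N x j + w (Suc j) * (s * ((\<Sum>i<n. (x (i, 0))\<^sup>2) / nrm n x)
        + (c - 1) * (\<Sum>i<n. (x (i, 0) / nrm n x) * q i))"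
    proof -
      have pt: "(x (i, 0) / nrm n x) * (x (i, Suc j) + w (Suc j) * D i) = (x (i, 0) / nrm n x) * x (i, Suc j)
          + w (Suc j) * (s * ((x (i, 0))\<^sup>2 / nrm n x) + (c - 1) * ((x (i, 0) / nrm n x) * q i))" for i
        by (simp add: D_def divide_inverse algebra_simps power2_eq_square)
      have gen: "(\<Sum>i<n. f i + a * (b * g i + d * h i)) = (\<Sum>i<n. f i) + a * (b * (\<Sum>i<n. g i) + d * (\<Sum>i<n. h i))"
        for f g h :: "nat \<Rightarrow> real" and a b d
        by (simp add: sum.distrib sum_distrib_left[symmetric])
      show ?thesis unfolding pt gen using j by (simp add: Tm_def sum_divide_distrib)
    qed
    also have "(\<Sum>i<n. (x (i, 0))\<^sup>2) / nrm n x = nrm n x"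
      by (simp only: nrm_sq[symmetric]) (cases "nrm n x = 0"; simp add: power2_eq_square)
    also have "(\<Sum>i<n. (x (i, 0) / nrm n x) * q i) = (\<Sum>l<N. w (Suc l) * Tm n N x l)"
    proof -
      have "(\<Sum>i<n. (x (i, 0) / nrm n x) * q i) = (\<Sum>i<n. \<Sum>l<N. w (Suc l) * ((x (i, 0) / nrm n x) * x (i, Suc l)))"
        by (simp add: q_def qf_shift sum_distrib_left mult.left_commute)
      also have "\<dots> = (\<Sum>l<N. \<Sum>i<n. w (Suc l) * ((x (i, 0) / nrm n x) * x (i, Suc l)))"
        by (rule sum.swap)
      also have "\<dots> = (\<Sum>l<N. w (Suc l) * Tm n N x l)"
        by (intro sum.cong refl) (simp add: Tm_def sum_distrib_left)
      finally show ?thesis .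
    qed
    finally show ?thesis .
  qed
  have X: "(vnorm n (obs n N \<beta> A wv))\<^sup>2 / (P + \<sigma>\<^sup>2) = (nrm n x)\<^sup>2"
  proof -
    have "\<sigma>\<^sup>2 > 0" using \<sigma> by simp
    then have "P + \<sigma>\<^sup>2 \<noteq> 0" using P by linarith
    then show ?thesis unfolding vn S2[symmetric] by (simp add: power_mult_distrib)
  qed
  have "Phi n N \<sigma> (Rot n N w c s x) = (A, wv)" by (simp add: A_def wv_def)
  moreover have "(\<lambda>j\<in>{0..<N}. Z1 n N \<beta> A wv j) = (\<lambda>j\<in>{0..<N}. Tm n N x j + w (Suc j) * (s * nrm n x + (c - 1) * (\<Sum>l<N. w (Suc l) * Tm n N x l)))"
    by (rule restrict_ext) (simp add: Z)
  ultimately show ?thesis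
    using X by (simp add: Fd_def Hf_def)
qed

abbreviation "Dt N \<equiv> PiM {0..<N} (\<lambda>_. borel :: real measure) \<Otimes>\<^sub>M (borel :: real measure)"
abbreviation "Gs I \<equiv> PiM I (\<lambda>_. gauss 0 1 :: real measure)"

lemma Hf_meas:
  "(\<lambda>(a, g). Hf N w c s (h a) g) \<in> measurable (M \<Otimes>\<^sub>M PiM {0..<N} (\<lambda>_. gauss 0 1)) (Dt N)"
  if h[measurable]: "h \<in> borel_measurable M"
  unfolding Hf_def by measurable

lemma AE_gauss_nonzero: "AE x in gauss 0 1. x \<noteq> 0"
proof -
  have "AE x in lborel. (x::real) \<noteq> 0" by (rule AE_lborel_singleton)
  then show ?thesis unfolding gauss_def by (subst AE_density) auto
qed

lemma kernel_step:
  assumes n: "n > 0"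
  shows "distr (GJ n N) (Dt N) (\<lambda>x. Hf N w c s (nrm n x) (Tm n N x))
       = distr (Gs ({0..<n} \<times> {0}) \<Otimes>\<^sub>M Gs {0..<N}) (Dt N) (\<lambda>(a, g). Hf N w c s (nrm n a) g)"
proof -
  let ?I0 = "{0..<n} \<times> {0::nat}" and ?Ip = "{0..<n} \<times> {1..N}"
  define T where "T a b = (\<lambda>k\<in>{0..<N}. \<Sum>i<n. (a (i, 0) / nrm n a) * b (i, Suc k))" for a b :: "nat \<times> nat \<Rightarrow> real"
  have M: "GJ n N = distr (Gs ?I0 \<Otimes>\<^sub>M Gs ?Ip) (GJ n N) (merge ?I0 ?Ip)"
    by (rule GJ_merge) (auto simp: Jn_def)
  have mm: "merge ?I0 ?Ip \<in> measurable (Gs ?I0 \<Otimes>\<^sub>M Gs ?Ip) (GJ n N)"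
    using measurable_merge[of ?I0 ?Ip "\<lambda>_. gauss 0 1"] Jn_split[of n N] by (simp add: Un_commute)
  have nrm_m: "nrm n \<in> borel_measurable (Gs I)" if "?I0 \<subseteq> I" for I
  proof -
    have "(\<lambda>x. x (i, 0)) \<in> borel_measurable (Gs I)" if "i < n" for i
      by (rule comp_meas_gauss) (use that \<open>?I0 \<subseteq> I\<close> in auto)
    then show ?thesis unfolding nrm_def by measurable
  qed
  have nJ: "nrm n \<in> borel_measurable (GJ n N)" by (rule nrm_m) (auto simp: Jn_def)
  have Tm_m: "(\<lambda>x. Tm n N x) \<in> measurable (GJ n N) (Gs {0..<N})"
    unfolding Tm_def
  proof (rule measurable_restrict)
    fix k assume k: "k \<in> {0..<N}"
    have c: "(\<lambda>x. x p) \<in> borel_measurable (GJ n N)" if "p \<in> Jn n N" for p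
      by (rule comp_meas_gauss[OF that])
    have "(\<lambda>x. \<Sum>i<n. x (i, 0) / nrm n x * x (i, Suc k)) \<in> borel_measurable (GJ n N)"
      using k nJ by (intro borel_measurable_sum borel_measurable_times borel_measurable_divide c) (auto simp: Jn_def)
    then show "(\<lambda>x. \<Sum>i<n. x (i, 0) / nrm n x * x (i, Suc k)) \<in> measurable (GJ n N) (gauss 0 1)" by simp
  qed
  have Hm: "(\<lambda>x. Hf N w c s (nrm n x) (Tm n N x)) \<in> measurable (GJ n N) (Dt N)"
  proof -
    have "(\<lambda>x. (x, Tm n N x)) \<in> measurable (GJ n N) (GJ n N \<Otimes>\<^sub>M Gs {0..<N})"
      using Tm_m by measurable
    from measurable_comp[OF this Hf_meas[OF nJ]]
    show ?thesis by (simp add: comp_def)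
  qed
  have Tmeas': "(\<lambda>x. T (fst x) (snd x)) \<in> measurable (Gs ?I0 \<Otimes>\<^sub>M Gs ?Ip) (Gs {0..<N})"
    unfolding T_def
  proof (rule measurable_restrict)
    fix k assume k: "k \<in> {0..<N}"
    have c0: "(\<lambda>x. fst x (i, 0)) \<in> borel_measurable (Gs ?I0 \<Otimes>\<^sub>M Gs ?Ip)" if "i < n" for i
      using that by (intro measurable_compose[OF measurable_fst comp_meas_gauss]) auto
    have cp: "(\<lambda>x. snd x (i, Suc k)) \<in> borel_measurable (Gs ?I0 \<Otimes>\<^sub>M Gs ?Ip)" if "i < n" for i
      using that k by (intro measurable_compose[OF measurable_snd comp_meas_gauss]) auto
    have nm: "(\<lambda>x. nrm n (fst x)) \<in> borel_measurable (Gs ?I0 \<Otimes>\<^sub>M Gs ?Ip)"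
      by (intro measurable_compose[OF measurable_fst nrm_m]) auto
    have "(\<lambda>x. \<Sum>i<n. fst x (i, 0) / nrm n (fst x) * snd x (i, Suc k)) \<in> borel_measurable (Gs ?I0 \<Otimes>\<^sub>M Gs ?Ip)"
      by (intro borel_measurable_sum borel_measurable_times borel_measurable_divide c0 cp nm) auto
    then show "(\<lambda>x. \<Sum>i<n. fst x (i, 0) / nrm n (fst x) * snd x (i, Suc k)) \<in> measurable (Gs ?I0 \<Otimes>\<^sub>M Gs ?Ip) (gauss 0 1)"
      by simp
  qed
  have "(\<lambda>(a, b). T a b) = (\<lambda>x. T (fst x) (snd x))" by (auto simp: fun_eq_iff)
  then have Tmeas: "(\<lambda>(a, b). T a b) \<in> measurable (Gs ?I0 \<Otimes>\<^sub>M Gs ?Ip) (Gs {0..<N})"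
    using Tmeas' by simp
  have Fm: "(\<lambda>(a, b). (a, T a b)) \<in> measurable (Gs ?I0 \<Otimes>\<^sub>M Gs ?Ip) (Gs ?I0 \<Otimes>\<^sub>M Gs {0..<N})"
    using Tmeas by measurable
  have Hf2: "(\<lambda>(a, g). Hf N w c s (nrm n a) g) \<in> measurable (Gs ?I0 \<Otimes>\<^sub>M Gs {0..<N}) (Dt N)"
    by (rule Hf_meas[OF nrm_m]) simp
  have KP: "distr (Gs ?I0 \<Otimes>\<^sub>M Gs ?Ip) (Gs ?I0 \<Otimes>\<^sub>M Gs {0..<N}) (\<lambda>(a, b). (a, T a b)) = Gs ?I0 \<Otimes>\<^sub>M Gs {0..<N}"
  proof (rule kernel_pair[OF _ _ _ Tmeas])
    show "sigma_finite_measure (Gs ?I0)"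
      by (rule prob_space_imp_sigma_finite, rule prob_space_PiM) simp
    show "sigma_finite_measure (Gs ?Ip)"
      by (rule prob_space_imp_sigma_finite, rule prob_space_PiM) simp
    show "sigma_finite_measure (Gs {0..<N})"
      by (rule prob_space_imp_sigma_finite, rule prob_space_PiM) simp
    have "AE a in Gs ?I0. a (0, 0) \<noteq> 0"
      by (rule AE_PiM_component[where P="\<lambda>x. x \<noteq> 0"]) (use n in \<open>auto simp: AE_gauss_nonzero\<close>)
    then show "AE a in Gs ?I0. distr (Gs ?Ip) (Gs {0..<N}) (T a) = Gs {0..<N}"
    proof eventually_elim
      case (elim a)
      have "nrm n a \<noteq> 0"
      proof -
        have "(a (0, 0))\<^sup>2 \<le> (\<Sum>i<n. (a (i, 0))\<^sup>2)"
          using n by (intro member_le_sum) auto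
        moreover have "(a (0, 0))\<^sup>2 > 0" using elim by simp
        ultimately show ?thesis unfolding nrm_def by auto
      qed
      then have u: "(\<Sum>i<n. (a (i, 0) / nrm n a)\<^sup>2) = 1"
        by (simp add: power_divide sum_divide_distrib[symmetric] nrm_sq[symmetric])
      show ?case unfolding T_def by (rule proj_gauss[OF u])
    qed
  qed
  have eq: "(\<lambda>x. Hf N w c s (nrm n x) (Tm n N x)) (merge ?I0 ?Ip ab) = (\<lambda>(a, g). Hf N w c s (nrm n a) g) ((\<lambda>(a, b). (a, T a b)) ab)"
    if "ab \<in> space (Gs ?I0 \<Otimes>\<^sub>M Gs ?Ip)" for ab
  proof -
    obtain a b where ab: "ab = (a, b)" by force
    have nm: "nrm n (merge ?I0 ?Ip (a, b)) = nrm n a"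
      unfolding nrm_def by (intro arg_cong[where f=sqrt] sum.cong) (auto simp: merge_def)
    have Tq: "Tm n N (merge ?I0 ?Ip (a, b)) = T a b"
      unfolding Tm_def T_def nm by (intro restrict_ext sum.cong) (auto simp: merge_def)
    show ?thesis by (simp only: ab prod.case nm Tq)
  qed
  have "distr (GJ n N) (Dt N) (\<lambda>x. Hf N w c s (nrm n x) (Tm n N x))
      = distr (Gs ?I0 \<Otimes>\<^sub>M Gs ?Ip) (Dt N) ((\<lambda>x. Hf N w c s (nrm n x) (Tm n N x)) \<circ> merge ?I0 ?Ip)"
    by (subst M, rule distr_distr[OF Hm mm])
  also have "\<dots> = distr (Gs ?I0 \<Otimes>\<^sub>M Gs ?Ip) (Dt N) ((\<lambda>(a, g). Hf N w c s (nrm n a) g) \<circ> (\<lambda>(a, b). (a, T a b)))"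
    by (rule distr_cong[OF refl refl]) (unfold comp_def, rule eq)
  also have "\<dots> = distr (distr (Gs ?I0 \<Otimes>\<^sub>M Gs ?Ip) (Gs ?I0 \<Otimes>\<^sub>M Gs {0..<N}) (\<lambda>(a, b). (a, T a b))) (Dt N) (\<lambda>(a, g). Hf N w c s (nrm n a) g)"
    by (rule distr_distr[symmetric, OF Hf2 Fm])
  also have "\<dots> = distr (Gs ?I0 \<Otimes>\<^sub>M Gs {0..<N}) (Dt N) (\<lambda>(a, g). Hf N w c s (nrm n a) g)"
    by (simp only: KP)
  finally show ?thesis .
qed

lemma Fd_meas: "Fd n N \<beta> P \<sigma> \<in> measurable (DS n N \<sigma>) (Dt N)"
  unfolding Fd_def Z1_def obs_def vnorm_def by measurable

lemma Phi_meas: "Phi n N \<sigma> \<in> measurable (GJ n N) (DS n N \<sigma>)"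
  unfolding Phi_def
proof (rule measurable_Pair)
  show "(\<lambda>x. \<lambda>p\<in>{0..<n} \<times> {0..<N}. 1 / sqrt (real n) * x (fst p, Suc (snd p))) \<in> measurable (GJ n N) (PiM ({0..<n} \<times> {0..<N}) (\<lambda>_. gauss 0 (1 / sqrt (real n))))"
  proof (rule measurable_restrict)
    fix p assume p: "p \<in> {0..<n} \<times> {0..<N}"
    have "(\<lambda>b. b (fst p, Suc (snd p))) \<in> borel_measurable (GJ n N)" by (rule comp_meas_gauss) (use p in \<open>auto simp: Jn_def\<close>)
    then show "(\<lambda>b. (1 / sqrt (real n)) * b (fst p, Suc (snd p))) \<in> measurable (GJ n N) (gauss 0 (1 / sqrt (real n)))" by simp
  qed
  show "(\<lambda>x. \<lambda>i\<in>{0..<n}. \<sigma> * x (i, 0)) \<in> measurable (GJ n N) (PiM {0..<n} (\<lambda>_. gauss 0 \<sigma>))"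
  proof (rule measurable_restrict)
    fix i assume i: "i \<in> {0..<n}"
    have "(\<lambda>b. b (i, 0::nat)) \<in> borel_measurable (GJ n N)" by (rule comp_meas_gauss) (use i in \<open>auto simp: Jn_def\<close>)
    then show "(\<lambda>b. \<sigma> * b (i, 0)) \<in> measurable (GJ n N) (gauss 0 \<sigma>)" by simp
  qed
qed

lemma Rot_meas_G:
  assumes cs: "c\<^sup>2 + s\<^sup>2 = 1" and c: "c > -1" and W: "(\<Sum>l\<in>{1..N}. (w l)\<^sup>2) = 1 \<or> s = 0"
  shows "Rot n N w c s \<in> measurable (GJ n N) (GJ n N)"
proof -
  have se: "sets (GJ n N) = sets (LJ n N)" by (rule sets_PiM_cong) auto
  have "measurable (GJ n N) (GJ n N) = measurable (LJ n N) (LJ n N)" by (rule measurable_cong_sets[OF se se])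
  then show ?thesis using Rot_meas[OF cs c W] by simp
qed

lemma reindex_I0:
  assumes n: "n > 0"
  shows "distr (Gs ({0..<n} \<times> {0}) \<Otimes>\<^sub>M Gs {0..<N}) (Dt N) (\<lambda>(a, g). Hf N w c s (nrm n a) g)
       = distr (Gs {0..<n} \<Otimes>\<^sub>M Gs {0..<N}) (Dt N) (\<lambda>(b, g). Hf N w c s (sqrt (\<Sum>i<n. (b i)\<^sup>2)) g)"
proof -
  let ?I0 = "{0..<n} \<times> {0::nat}"
  define E where "E b = (\<lambda>p\<in>?I0. b (fst p))" for b :: "nat \<Rightarrow> real"
  have R: "distr (Gs {0..<n}) (Gs ?I0) E = Gs ?I0"
  proof -
    have "fst \<in> ?I0 \<rightarrow> {0..<n}" by auto
    moreover have "inj_on fst ?I0" by (auto simp: inj_on_def)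
    ultimately show ?thesis
      unfolding E_def using distr_PiM_reindex[of "{0..<n}" "\<lambda>_. gauss 0 1" fst ?I0] by simp
  qed
  have Em: "E \<in> measurable (Gs {0..<n}) (Gs ?I0)"
    unfolding E_def by (intro measurable_restrict) (auto intro: comp_meas_gauss[simplified])
  have idm: "(\<lambda>x. x) \<in> measurable (Gs {0..<N}) (Gs {0..<N})" by simp
  have sf: "sigma_finite_measure (distr (Gs {0..<N}) (Gs {0..<N}) (\<lambda>x. x))"
    by (simp add: prob_space_imp_sigma_finite prob_space_PiM)
  have P: "Gs ?I0 \<Otimes>\<^sub>M Gs {0..<N} = distr (Gs {0..<n} \<Otimes>\<^sub>M Gs {0..<N}) (Gs ?I0 \<Otimes>\<^sub>M Gs {0..<N}) (\<lambda>(x, y). (E x, y))"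
    using pair_measure_distr[OF Em idm sf] R by simp
  have nrm_m: "nrm n \<in> borel_measurable (Gs ?I0)"
  proof -
    have "(\<lambda>x. x (i, 0)) \<in> borel_measurable (Gs ?I0)" if "i < n" for i
      by (rule comp_meas_gauss) (use that in auto)
    then show ?thesis unfolding nrm_def by measurable
  qed
  have Hm: "(\<lambda>(a, g). Hf N w c s (nrm n a) g) \<in> measurable (Gs ?I0 \<Otimes>\<^sub>M Gs {0..<N}) (Dt N)"
    by (rule Hf_meas[OF nrm_m])
  have Pm: "(\<lambda>(x, y). (E x, y)) \<in> measurable (Gs {0..<n} \<Otimes>\<^sub>M Gs {0..<N}) (Gs ?I0 \<Otimes>\<^sub>M Gs {0..<N})"
    using Em by measurable
  have "distr (Gs ?I0 \<Otimes>\<^sub>M Gs {0..<N}) (Dt N) (\<lambda>(a, g). Hf N w c s (nrm n a) g)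
     = distr (Gs {0..<n} \<Otimes>\<^sub>M Gs {0..<N}) (Dt N) ((\<lambda>(a, g). Hf N w c s (nrm n a) g) \<circ> (\<lambda>(x, y). (E x, y)))"
    by (subst P, rule distr_distr[OF Hm Pm])
  also have "\<dots> = distr (Gs {0..<n} \<Otimes>\<^sub>M Gs {0..<N}) (Dt N) (\<lambda>(b, g). Hf N w c s (sqrt (\<Sum>i<n. (b i)\<^sup>2)) g)"
  proof (rule distr_cong[OF refl refl])
    fix x assume "x \<in> space (Gs {0..<n} \<Otimes>\<^sub>M Gs {0..<N})"
    obtain b g where x: "x = (b, g)" by force
    have "nrm n (E b) = sqrt (\<Sum>i<n. (b i)\<^sup>2)"
      unfolding nrm_def E_def by (intro arg_cong[where f=sqrt] sum.cong) auto
    then show "((\<lambda>(a, g). Hf N w c s (nrm n a) g) \<circ> (\<lambda>(x, y). (E x, y))) x = (\<lambda>(b, g). Hf N w c s (sqrt (\<Sum>i<n. (b i)\<^sup>2)) g) x"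
      by (simp add: x)
  qed
  finally show ?thesis .
qed

lemma core:
  fixes n N :: nat and P \<sigma> :: real and \<beta> :: "nat \<Rightarrow> real"
  assumes n: "n > 0" and \<sigma>: "\<sigma> > 0" and P: "P \<ge> 0"
    and bsq: "(\<Sum>j<N. (\<beta> j)\<^sup>2) = real n * P" and hN: "P = 0 \<Longrightarrow> N = 0"
  shows "\<exists>\<mu>. is_mvn {0..<N} (\<lambda>i j. (if i = j then 1 else 0) - \<beta> i * \<beta> j / (real n * (P + \<sigma>\<^sup>2))) \<mu> \<and>
           distr (design_noise_space n N \<sigma>) (PiM {0..<N} (\<lambda>_. borel) \<Otimes>\<^sub>M borel)
                 (\<lambda>(A, w). (\<lambda>j\<in>{0..<N}. Z1 n N \<beta> A w j, (vnorm n (obs n N \<beta> A w))\<^sup>2 / (P + \<sigma>\<^sup>2)))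
         = distr (\<mu> \<Otimes>\<^sub>M chi_square n) (PiM {0..<N} (\<lambda>_. borel) \<Otimes>\<^sub>M borel)
                 (\<lambda>(N1, X). (\<lambda>j\<in>{0..<N}. \<beta> j / sqrt (P + \<sigma>\<^sup>2) * (sqrt X / sqrt (real n)) + N1 j, X))"
proof -
  define S where "S = sqrt (P + \<sigma>\<^sup>2)"
  define c where "c = \<sigma> / S"
  define s where "s = sqrt P / S"
  define w where "w k = \<beta> (k - 1) / sqrt (real n * P)" for k
  define C where "C j k = (if j = k then 1 else 0) + (c - 1) * w (Suc j) * w (Suc k)" for j k
  have \<sigma>2: "\<sigma>\<^sup>2 > 0" using \<sigma> by simp
  have PS: "P + \<sigma>\<^sup>2 > 0" using \<sigma>2 P by linarith
  have Spos: "S > 0" using PS by (simp add: S_def)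
  have S2: "S\<^sup>2 = P + \<sigma>\<^sup>2" using PS by (simp add: S_def)
  have cs: "c\<^sup>2 + s\<^sup>2 = 1"
  proof -
    have "c\<^sup>2 + s\<^sup>2 = (\<sigma>\<^sup>2 + P) / S\<^sup>2" using P by (simp add: c_def s_def power_divide add_divide_distrib)
    also have "\<dots> = 1" using S2 PS by (simp add: add.commute)
    finally show ?thesis .
  qed
  have cgt: "c > -1"
  proof -
    have "c > 0" using \<sigma> Spos by (simp add: c_def)
    then show ?thesis by linarith
  qed
  have Ppos: "P > 0" if "N > 0" using hN that P by fastforce
  have hw: "\<beta> j / sqrt (real n) = sqrt P * w (Suc j)" if j: "j < N" for j
  proof -
    have "P > 0" using Ppos j by simp
    then show ?thesis using n by (simp add: w_def real_sqrt_mult)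
  qed
  have W1: "(\<Sum>l<N. (w (Suc l))\<^sup>2) = 1" if "P > 0"
  proof -
    have "(\<Sum>l<N. (w (Suc l))\<^sup>2) = (\<Sum>l<N. (\<beta> l)\<^sup>2) / (real n * P)"
      using that n by (simp add: w_def power_divide sum_divide_distrib)
    also have "\<dots> = 1" using bsq that n by simp
    finally show ?thesis .
  qed
  have Wd: "(\<Sum>l\<in>{1..N}. (w l)\<^sup>2) = 1 \<or> s = 0"
  proof (cases "P = 0")
    case True then show ?thesis by (simp add: s_def)
  next
    case False then have "P > 0" using P by simp
    then show ?thesis using W1 by (simp add: sum.atLeast1_atMost_eq)
  qed
  have hW: "sqrt P * (\<Sum>l\<in>{1..N}. (w l)\<^sup>2) = sqrt P"
  proof (cases "P = 0")
    case True then show ?thesis by simp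
  next
    case False then have "P > 0" using P by simp
    then show ?thesis using W1 by (simp add: sum.atLeast1_atMost_eq)
  qed
  define \<mu> where "\<mu> = distr (Gs {0..<N}) (PiM {0..<N} (\<lambda>_. borel)) (\<lambda>g. \<lambda>j\<in>{0..<N}. \<Sum>k\<in>{0..<N}. C j k * g k)"
  have mvn: "is_mvn {0..<N} (\<lambda>i j. (if i = j then 1 else 0) - \<beta> i * \<beta> j / (real n * (P + \<sigma>\<^sup>2))) \<mu>"
    unfolding is_mvn_def
  proof (intro exI[of _ C] conjI ballI)
    show "\<mu> = distr (std_gauss_vec {0..<N}) (PiM {0..<N} (\<lambda>_. borel)) (\<lambda>g. \<lambda>i\<in>{0..<N}. \<Sum>k\<in>{0..<N}. C i k * g k)"
      by (simp add: \<mu>_def std_gauss_vec_def)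
    fix i j assume i: "i \<in> {0..<N}" and j: "j \<in> {0..<N}"
    define a where "a = c - 1"
    define u where "u k = w (Suc k)" for k
    have Np: "N > 0" using i by simp
    have Pp: "P > 0" using Ppos[OF Np] .
    have Wu: "(\<Sum>k\<in>{0..<N}. (u k)\<^sup>2) = 1" using W1[OF Pp] by (simp add: u_def atLeast0LessThan)
    have "(\<Sum>k\<in>{0..<N}. C i k * C j k) = (\<Sum>k\<in>{0..<N}. (if i = k \<and> j = k then 1 else 0) + a * u j * (if i = k then u k else 0)
          + a * u i * (if j = k then u k else 0) + a\<^sup>2 * u i * u j * (u k)\<^sup>2)"
      by (intro sum.cong refl) (auto simp: C_def a_def u_def algebra_simps power2_eq_square)
    also have "\<dots> = (\<Sum>k\<in>{0..<N}. (if i = k \<and> j = k then 1 else 0)) + a * u j * (\<Sum>k\<in>{0..<N}. (if i = k then u k else 0))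
          + a * u i * (\<Sum>k\<in>{0..<N}. (if j = k then u k else 0)) + a\<^sup>2 * u i * u j * (\<Sum>k\<in>{0..<N}. (u k)\<^sup>2)"
      by (simp only: sum.distrib sum_distrib_left)
    also have "(\<Sum>k\<in>{0..<N}. (if i = k \<and> j = k then 1 else 0)) = (if i = j then 1 else (0::real))"
      using i by (cases "i = j") (auto intro!: sum.neutral)
    also have "(\<Sum>k\<in>{0..<N}. (if i = k then u k else 0)) = u i" using i by simp
    also have "(\<Sum>k\<in>{0..<N}. (if j = k then u k else 0)) = u j" using j by simp
    also note Wu
    finally have e: "(\<Sum>k\<in>{0..<N}. C i k * C j k) = (if i = j then 1 else 0) + (2 * a + a\<^sup>2) * (u i * u j)"
      by (simp add: algebra_simps power2_eq_square)
    have a2: "2 * a + a\<^sup>2 = - (P / (P + \<sigma>\<^sup>2))"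
    proof -
      have "2 * a + a\<^sup>2 = c\<^sup>2 - 1" by (simp add: a_def power2_eq_square algebra_simps)
      also have "\<dots> = - s\<^sup>2" using cs by simp
      also have "s\<^sup>2 = P / (P + \<sigma>\<^sup>2)" using P S2 by (simp add: s_def power_divide)
      finally show ?thesis .
    qed
    have uu: "u i * u j = \<beta> i * \<beta> j / (real n * P)"
      using Pp n by (simp add: u_def w_def real_sqrt_mult) (simp add: field_simps)
    show "(if i = j then 1 else 0) - \<beta> i * \<beta> j / (real n * (P + \<sigma>\<^sup>2)) = (\<Sum>k\<in>{0..<N}. C i k * C j k)"
    proof -
      have nz: "real n * P \<noteq> 0" "P + \<sigma>\<^sup>2 \<noteq> 0" using Pp n PS by auto
      have "P / (P + \<sigma>\<^sup>2) * (\<beta> i * \<beta> j / (real n * P)) = (\<beta> i * \<beta> j) * (P / (real n * P)) / (P + \<sigma>\<^sup>2)"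
        by simp
      also have "P / (real n * P) = 1 / real n" using Pp by simp
      finally have k: "P / (P + \<sigma>\<^sup>2) * (\<beta> i * \<beta> j / (real n * P)) = \<beta> i * \<beta> j / (real n * (P + \<sigma>\<^sup>2))"
        by simp
      show ?thesis unfolding e a2 uu using k by simp
    qed
  qed
  have LHS: "distr (design_noise_space n N \<sigma>) (Dt N) (Fd n N \<beta> P \<sigma>)
      = distr (Gs {0..<n} \<Otimes>\<^sub>M Gs {0..<N}) (Dt N) (\<lambda>(b, g). Hf N w c s (sqrt (\<Sum>i<n. (b i)\<^sup>2)) g)"
  proof -
    have "distr (design_noise_space n N \<sigma>) (Dt N) (Fd n N \<beta> P \<sigma>)
        = distr (distr (GJ n N) (DS n N \<sigma>) (Phi n N \<sigma>)) (Dt N) (Fd n N \<beta> P \<sigma>)"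
      by (simp only: design_as_GJ[OF n \<sigma>])
    also have "\<dots> = distr (GJ n N) (Dt N) (Fd n N \<beta> P \<sigma> \<circ> Phi n N \<sigma>)"
      by (rule distr_distr[OF Fd_meas Phi_meas])
    also have "\<dots> = distr (distr (GJ n N) (GJ n N) (Rot n N w c s)) (Dt N) (Fd n N \<beta> P \<sigma> \<circ> Phi n N \<sigma>)"
      by (simp only: Rot_gauss[OF cs cgt Wd])
    also have "\<dots> = distr (GJ n N) (Dt N) (Fd n N \<beta> P \<sigma> \<circ> Phi n N \<sigma> \<circ> Rot n N w c s)"
      by (rule distr_distr[OF measurable_comp[OF Phi_meas Fd_meas] Rot_meas_G[OF cs cgt Wd]])
    also have "\<dots> = distr (GJ n N) (Dt N) (\<lambda>x. Hf N w c s (nrm n x) (Tm n N x))"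
      by (rule distr_cong[OF refl refl])
         (simp add: FPR[OF n \<sigma> P S_def c_def s_def hw hW])
    also have "\<dots> = distr (Gs ({0..<n} \<times> {0}) \<Otimes>\<^sub>M Gs {0..<N}) (Dt N) (\<lambda>(a, g). Hf N w c s (nrm n a) g)"
      by (rule kernel_step[OF n])
    also have "\<dots> = distr (Gs {0..<n} \<Otimes>\<^sub>M Gs {0..<N}) (Dt N) (\<lambda>(b, g). Hf N w c s (sqrt (\<Sum>i<n. (b i)\<^sup>2)) g)"
      by (rule reindex_I0[OF n])
    finally show ?thesis .
  qed
  have RHS: "distr (\<mu> \<Otimes>\<^sub>M chi_square n) (Dt N)
                 (\<lambda>(N1, X). (\<lambda>j\<in>{0..<N}. \<beta> j / sqrt (P + \<sigma>\<^sup>2) * (sqrt X / sqrt (real n)) + N1 j, X))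
      = distr (Gs {0..<n} \<Otimes>\<^sub>M Gs {0..<N}) (Dt N) (\<lambda>(b, g). Hf N w c s (sqrt (\<Sum>i<n. (b i)\<^sup>2)) g)"
  proof -
    define Cm where "Cm g = (\<lambda>j\<in>{0..<N}. \<Sum>k\<in>{0..<N}. C j k * g k)" for g :: "nat \<Rightarrow> real"
    define sq where "sq g = (\<Sum>i<n. (g i)\<^sup>2)" for g :: "nat \<Rightarrow> real"
    define Fr where "Fr = (\<lambda>(N1, X). (\<lambda>j\<in>{0..<N}. \<beta> j / sqrt (P + \<sigma>\<^sup>2) * (sqrt X / sqrt (real n)) + N1 j, X))"
    have Cmm: "Cm \<in> measurable (Gs {0..<N}) (PiM {0..<N} (\<lambda>_. borel))"
      unfolding Cm_def by measurable
    have sqm: "sq \<in> borel_measurable (Gs {0..<n})"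
      unfolding sq_def by measurable
    have Frm: "Fr \<in> measurable (PiM {0..<N} (\<lambda>_. borel) \<Otimes>\<^sub>M borel) (Dt N)"
      unfolding Fr_def by measurable
    have chi: "chi_square n = distr (Gs {0..<n}) borel sq"
      unfolding chi_square_def std_gauss_vec_def sq_def by (simp add: atLeast0LessThan)
    have sf: "sigma_finite_measure (distr (Gs {0..<n}) borel sq)"
      by (rule prob_space_imp_sigma_finite, rule prob_space.prob_space_distr[OF prob_space_PiM sqm]) simp
    have P1: "\<mu> \<Otimes>\<^sub>M chi_square n = distr (Gs {0..<N} \<Otimes>\<^sub>M Gs {0..<n}) (PiM {0..<N} (\<lambda>_. borel) \<Otimes>\<^sub>M borel) (\<lambda>(x, y). (Cm x, sq y))"
      unfolding \<mu>_def chi Cm_def[symmetric] by (rule pair_measure_distr[OF Cmm sqm sf])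
    interpret PSF: pair_sigma_finite "Gs {0..<N}" "Gs {0..<n}"
      by (intro pair_sigma_finite.intro prob_space_imp_sigma_finite prob_space_PiM) simp_all
    have P2: "Gs {0..<N} \<Otimes>\<^sub>M Gs {0..<n} = distr (Gs {0..<n} \<Otimes>\<^sub>M Gs {0..<N}) (Gs {0..<N} \<Otimes>\<^sub>M Gs {0..<n}) (\<lambda>(x, y). (y, x))"
      by (rule PSF.distr_pair_swap)
    have pm: "(\<lambda>(x, y). (Cm x, sq y)) \<in> measurable (Gs {0..<N} \<Otimes>\<^sub>M Gs {0..<n}) (PiM {0..<N} (\<lambda>_. borel) \<Otimes>\<^sub>M borel)"
      using Cmm sqm by measurable
    have swm: "(\<lambda>(x, y). (y, x)) \<in> measurable (Gs {0..<n} \<Otimes>\<^sub>M Gs {0..<N}) (Gs {0..<N} \<Otimes>\<^sub>M Gs {0..<n})"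
      by measurable
    have "distr (\<mu> \<Otimes>\<^sub>M chi_square n) (Dt N) Fr = distr (Gs {0..<N} \<Otimes>\<^sub>M Gs {0..<n}) (Dt N) (Fr \<circ> (\<lambda>(x, y). (Cm x, sq y)))"
      by (simp only: P1) (rule distr_distr[OF Frm pm])
    also have "\<dots> = distr (Gs {0..<n} \<Otimes>\<^sub>M Gs {0..<N}) (Dt N) (Fr \<circ> (\<lambda>(x, y). (Cm x, sq y)) \<circ> (\<lambda>(x, y). (y, x)))"
      by (subst P2) (rule distr_distr[OF measurable_comp[OF pm Frm] swm])
    also have "\<dots> = distr (Gs {0..<n} \<Otimes>\<^sub>M Gs {0..<N}) (Dt N) (\<lambda>(b, g). Hf N w c s (sqrt (\<Sum>i<n. (b i)\<^sup>2)) g)"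
    proof (rule distr_cong[OF refl refl])
      fix x assume "x \<in> space (Gs {0..<n} \<Otimes>\<^sub>M Gs {0..<N})"
      obtain b g where x: "x = (b, g)" by force
      define r where "r = sqrt (sq b)"
      have r2: "r\<^sup>2 = sq b" unfolding r_def sq_def by (simp add: sum_nonneg)
      have comp: "\<beta> j / sqrt (P + \<sigma>\<^sup>2) * (r / sqrt (real n)) + Cm g j
          = g j + w (Suc j) * (s * r + (c - 1) * (\<Sum>l<N. w (Suc l) * g l))" if j: "j < N" for j
      proof -
        have "\<beta> j / sqrt (P + \<sigma>\<^sup>2) * (r / sqrt (real n)) = (\<beta> j / sqrt (real n)) * r / S"
          by (simp add: S_def)
        also have "\<dots> = w (Suc j) * s * r" by (simp add: hw[OF j] s_def)
        finally have e1: "\<beta> j / sqrt (P + \<sigma>\<^sup>2) * (r / sqrt (real n)) = w (Suc j) * s * r" .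
        have "Cm g j = (\<Sum>k\<in>{0..<N}. C j k * g k)" using j by (simp add: Cm_def)
        also have "\<dots> = (\<Sum>k\<in>{0..<N}. (if j = k then g k else 0) + (c - 1) * w (Suc j) * (w (Suc k) * g k))"
          by (intro sum.cong refl) (auto simp: C_def algebra_simps)
        also have "\<dots> = (\<Sum>k\<in>{0..<N}. (if j = k then g k else 0)) + (\<Sum>k\<in>{0..<N}. (c - 1) * w (Suc j) * (w (Suc k) * g k))"
          by (rule sum.distrib)
        also have "(\<Sum>k\<in>{0..<N}. (if j = k then g k else 0)) = g j" using j by simp
        also have "(\<Sum>k\<in>{0..<N}. (c - 1) * w (Suc j) * (w (Suc k) * g k)) = (c - 1) * w (Suc j) * (\<Sum>l<N. w (Suc l) * g l)"
          by (simp add: sum_distrib_left[symmetric] atLeast0LessThan)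
        finally have e2: "Cm g j = g j + (c - 1) * w (Suc j) * (\<Sum>l<N. w (Suc l) * g l)" .
        show ?thesis unfolding e1 e2 by (simp add: algebra_simps)
      qed
      have "(\<lambda>j\<in>{0..<N}. \<beta> j / sqrt (P + \<sigma>\<^sup>2) * (r / sqrt (real n)) + Cm g j)
          = (\<lambda>j\<in>{0..<N}. g j + w (Suc j) * (s * r + (c - 1) * (\<Sum>l<N. w (Suc l) * g l)))"
        by (rule restrict_ext, rule comp) simp
      then show "(Fr \<circ> (\<lambda>(x, y). (Cm x, sq y)) \<circ> (\<lambda>(x, y). (y, x))) x = (\<lambda>(b, g). Hf N w c s (sqrt (\<Sum>i<n. (b i)\<^sup>2)) g) x"
        by (simp add: x Fr_def Hf_def r2 flip: r_def sq_def)
    qed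
    finally show ?thesis unfolding Fr_def .
  qed
  show ?thesis
    using mvn LHS RHS unfolding Fd_def by auto
qed

theorem mainTheorem3:
  fixes n M L :: nat and Pl :: "nat \<Rightarrow> real" and P \<sigma> :: real and \<beta> :: "nat \<Rightarrow> real"
  assumes n_pos: "n > 0"
    and Pl_pos: "\<And>l. l < L \<Longrightarrow> Pl l > 0"
    and P_def: "P = (\<Sum>l<L. Pl l)"
    and sigma_pos: "\<sigma> > 0"
    and beta_sec: "\<And>l. l < L \<Longrightarrow>
          \<exists>!j. j \<in> {l * M..<(l + 1) * M} \<and> \<beta> j \<noteq> 0"
    and beta_val: "\<And>l j. l < L \<Longrightarrow> j \<in> {l * M..<(l + 1) * M} \<Longrightarrow> \<beta> j \<noteq> 0 \<Longrightarrow>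
          \<beta> j = sqrt (real n * Pl l)"
  shows "\<exists>\<mu>. is_mvn {0..<M * L}
             (\<lambda>i j. (if i = j then 1 else 0) - \<beta> i * \<beta> j / (real n * (P + \<sigma>\<^sup>2))) \<mu> \<and>
           distr (design_noise_space n (M * L) \<sigma>)
                 (PiM {0..<M * L} (\<lambda>_. borel) \<Otimes>\<^sub>M borel)
                 (\<lambda>(A, w). (\<lambda>j\<in>{0..<M * L}. Z1 n (M * L) \<beta> A w j,
                            (vnorm n (obs n (M * L) \<beta> A w))\<^sup>2 / (P + \<sigma>\<^sup>2)))
         = distr (\<mu> \<Otimes>\<^sub>M chi_square n)
                 (PiM {0..<M * L} (\<lambda>_. borel) \<Otimes>\<^sub>M borel)
                 (\<lambda>(N1, X). (\<lambda>j\<in>{0..<M * L}.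
                      \<beta> j / sqrt (P + \<sigma>\<^sup>2) * (sqrt X / sqrt (real n)) + N1 j, X))"
proof (rule core[OF n_pos sigma_pos])
  show P0: "P \<ge> 0" unfolding P_def using Pl_pos by (intro sum_nonneg) (auto intro: less_imp_le)
  show "M * L = 0" if "P = 0"
  proof (rule ccontr)
    assume "M * L \<noteq> 0"
    then have L: "L > 0" by simp
    have "Pl 0 \<le> P" unfolding P_def using Pl_pos L
      by (intro member_le_sum) (auto intro: less_imp_le)
    then show False using Pl_pos[OF L] that by simp
  qed
  have blk: "(\<Sum>j\<in>{l * M..<l * M + M}. (\<beta> j)\<^sup>2) = real n * Pl l" if l: "l < L" for l
  proof -
    obtain j0 where j0: "j0 \<in> {l * M..<(l + 1) * M}" "\<beta> j0 \<noteq> 0"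
      and uniq: "\<And>j. j \<in> {l * M..<(l + 1) * M} \<Longrightarrow> \<beta> j \<noteq> 0 \<Longrightarrow> j = j0"
      using beta_sec[OF l] by blast
    have "(\<Sum>j\<in>{l * M..<l * M + M}. (\<beta> j)\<^sup>2) = (\<Sum>j\<in>{l * M..<l * M + M}. if j = j0 then (\<beta> j0)\<^sup>2 else 0)"
      by (intro sum.cong refl) (use uniq in \<open>auto simp: add.commute\<close>)
    also have "\<dots> = (\<beta> j0)\<^sup>2" using j0(1) by (simp add: add.commute)
    also have "\<dots> = real n * Pl l"
      using beta_val[OF l j0] Pl_pos[OF l] by simp
    finally show ?thesis .
  qed
  have "(\<Sum>j<M * L. (\<beta> j)\<^sup>2) = (\<Sum>l<L. \<Sum>j\<in>{l * M..<l * M + M}. (\<beta> j)\<^sup>2)"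
    using sum.nat_group[of "\<lambda>j. (\<beta> j)\<^sup>2" M L] by (simp add: mult.commute)
  also have "\<dots> = (\<Sum>l<L. real n * Pl l)" by (intro sum.cong refl) (simp add: blk)
  also have "\<dots> = real n * P" by (simp add: P_def sum_distrib_left)
  finally show "(\<Sum>j<M * L. (\<beta> j)\<^sup>2) = real n * P" .
qed

end
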